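(* Let $\varrho : \mathbb{R} \to \mathbb{R}$ be measurable with $\varrho(0) = 0$ and let $d, \sigma \in \mathbb{N}$. For $W \in \mathbb{N}$, define \[ \mathcal{NN}^{\sigma,\varrho}_{d,W} := \{ R_\varrho\Phi : \Phi \text{ is a } (\sigma,W)\text{-quantized NN with } W(\Phi) \le W,\ d_{\mathrm{in}}(\Phi) = d,\ d_{\mathrm{out}}(\Phi) = 1\}. \] Let $\emptyset\neq\Omega\subset\mathbb{R}^d$ be a bounded Lipschitz domain, let $\mathcal{S}$, $s^\ast$ be either (a) $\mathcal{S} = \mathcal{B}(0,1;B^\tau_{p,q}(\Omega;\mathbb{R}))$, $s^\ast=\tau/d$ with $p,q\in(0,\infty]$, $\tau>d(\frac1p-\frac12)_+$, or (b) $\mathcal{S}=\mathcal{B}(0,1;W^{k,p}(\Omega))$, $s^\ast=k/d$ with $p\in[1,\infty]$, $k\in\mathbb{N}$, $k>d(\frac1p-\frac12)_+$, and let $\mathbb{P}$ be the Borel probability measure on $\mathcal{S}$ constructed for the phase-transition theorem for these classes. Then: 1. There is $C = C(d,\sigma) \in \mathbb{N}$ such that for each $s > s^\ast$ there are $c,\varepsilon_0 > 0$ satisfying \[ \mathbb{P}^\ast\Big(\Big\{f\in\mathcal{S} : \min_{g \in \mathcal{NN}^{\sigma,\varrho}_{d,W}} \|f - g\|_{L^2(\Omega)} \le \varepsilon\Big\}\Big) \le 2^{C \cdot W \lceil \log_2(1+W)\rceil^2 - c\cdot\varepsilon^{-1/s}} \qquad \forall\, \varepsilon\in(0,\varepsilon_0)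 \] (for every $W\in\mathbb{N}$). 2. If we define $W^{\sigma,\varrho}_\varepsilon(f) := \inf\{W \in \mathbb{N} : \exists\, g \in \mathcal{NN}^{\sigma,\varrho}_{d,W} \text{ with } \|f-g\|_{L^2(\Omega)} \le \varepsilon\} \in \mathbb{N}\cup\{\infty\}$ and \[ \mathcal{A}^\ast_{\mathcal{NN},\varrho} := \{ f \in \mathcal{S} : \exists\, \tau \in (0,\tfrac{1}{s^\ast}),\ \sigma\in\mathbb{N},\ C>0 \ \forall\, \varepsilon\in(0,1): W^{\sigma,\varrho}_\varepsilon(f) \le C\cdot\varepsilon^{-\tau}\}, \] then $\mathbb{P}^\ast(\mathcal{A}^\ast_{\mathcal{NN},\varrho}) = 0$.
   Context: A neural network with architecture $(N_0,\dots,N_L)$, $N_0=d$, is a tuple $\Phi=((A_1,b_1),\dots,(A_L,b_L))$ with $A_\ell\in\mathbb{R}^{N_\ell\times N_{\ell-1}}$, $b_\ell\in\mathbb{R}^{N_\ell}$; its realization is $R_\varrho\Phi:\mathbb{R}^d\to\mathbb{R}^{N_L}$, $x\mapsto x^{(L)}$, with $x^{(0)}=x$, $x^{(\ell+1)}=\varrho(A_{\ell+1}x^{(\ell)}+b_{\ell+1})$ for $0\le\ell\le L-2$ (componentwise $\varrho$) and $x^{(L)}=A_Lx^{(L-1)}+b_L$. $W(\Phi)=\sum_\ell(\|A_\ell\|_{\ell^0}+\|b_\ell\|_{\ell^0})$ is the number of nonzero weights, $d_{\mathrm{in}}(\Phi)=N_0$, $d_{\mathrm{out}}(\Phi)=N_L$.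 $\Phi$ is $(\sigma,W)$-quantized if all entries of all $A_\ell,b_\ell$ lie in $[-W^{\sigma\lceil\log_2 W\rceil},W^{\sigma\lceil\log_2 W\rceil}]\cap 2^{-\sigma\lceil\log_2 W\rceil^2}\mathbb{Z}$. $\mathbb{P}^\ast$ is the outer measure induced by $\mathbb{P}$. The measure $\mathbb{P}$ is critical: for every $s>s^\ast$ there exist $c,\varepsilon_0>0$ with $\mathbb{P}(\mathcal{S}\cap\mathcal{B}(g,\varepsilon;L^2(\Omega)))\le 2^{-c\varepsilon^{-1/s}}$ for all $g\in L^2(\Omega)$, $\varepsilon\in(0,\varepsilon_0)$; $s^\ast$ equals the optimal compression rate of $\mathcal{S}$ in $L^2(\Omega)$. $\mathcal{B}(\mathbf{x},r;\mathbf{X})$ denotes the closed ball. *)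

theory Defs
  imports "HOL-Probability.Probability"
begin

text \<open>A network is
  (Ns, (A1,b1), Ls) where Ns = [N_1,...,N_L] are the layer widths,
  A1 : N_1 x d, b1 : N_1 is the first layer (columns indexed by the
  coordinates of the input space real^'d), and Ls = [(A_2,b_2),...,(A_L,b_L)]
  with A_l : N_l x N_(l-1).  Entries outside the index ranges are ignored.\<close>

type_synonym layer = "(nat \<Rightarrow> nat \<Rightarrow> real) \<times> (nat \<Rightarrow> real)"
type_synonym 'd network =
  "nat list \<times> ((nat \<Rightarrow> 'd \<Rightarrow> real) \<times> (nat \<Rightarrow> real)) \<times> layer list"

definition nn_valid :: "'d network \<Rightarrow> bool" where
  "nn_valid \<Phi> = (case \<Phi> of (Ns, _, Ls) \<Rightarrow> length Ns = Suc (length Ls))"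

definition d_out :: "'d network \<Rightarrow> nat" where
  "d_out \<Phi> = last (fst \<Phi>)"

text \<open>Given the pre-activation z of the current layer (width n), apply the
  remaining layers: x^(l) = rho(z), next pre-activation = A x^(l) + b;
  the last layer is affine (no activation).\<close>
fun rt :: "(real \<Rightarrow> real) \<Rightarrow> nat \<Rightarrow> (nat \<Rightarrow> real) \<Rightarrow> nat list \<Rightarrow> layer list \<Rightarrow> (nat \<Rightarrow> real)" where
  "rt \<rho> n z (m # ms) ((A, b) # Ls) = rt \<rho> m (\<lambda>i. (\<Sum>j<n. A i j * \<rho> (z j)) + b i) ms Ls"
| "rt \<rho> n z _ _ = z"

text \<open>Realization (scalar output, i.e. component 0; used only when d_out = 1).\<close>
definition realize :: "(real \<Rightarrow> real) \<Rightarrow> ('d::finite) network \<Rightarrow> real^'d \<Rightarrow> real" where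
  "realize \<rho> \<Phi> x = (case \<Phi> of (Ns, (A1, b1), Ls) \<Rightarrow>
     rt \<rho> (hd Ns) (\<lambda>i. (\<Sum>j\<in>UNIV. A1 i j * x $ j) + b1 i) (tl Ns) Ls 0)"

fun wt :: "nat \<Rightarrow> nat list \<Rightarrow> layer list \<Rightarrow> nat" where
  "wt n (m # ms) ((A, b) # Ls) =
     card {(i, j). i < m \<and> j < n \<and> A i j \<noteq> 0} + card {i. i < m \<and> b i \<noteq> 0} + wt m ms Ls"
| "wt _ _ _ = 0"

definition nweights :: "('d::finite) network \<Rightarrow> nat" where
  "nweights \<Phi> = (case \<Phi> of (Ns, (A1, b1), Ls) \<Rightarrow>
     card {(i, j). i < hd Ns \<and> A1 i j \<noteq> 0} + card {i. i < hd Ns \<and> b1 i \<noteq> 0}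
     + wt (hd Ns) (tl Ns) Ls)"

definition qgrid :: "nat \<Rightarrow> nat \<Rightarrow> real \<Rightarrow> bool" where
  "qgrid \<sigma> W x = (let k = nat \<lceil>log 2 (real W)\<rceil> in
     \<bar>x\<bar> \<le> real W ^ (\<sigma> * k) \<and> x * 2 ^ (\<sigma> * k\<^sup>2) \<in> \<int>)"

fun qt :: "nat \<Rightarrow> nat \<Rightarrow> nat \<Rightarrow> nat list \<Rightarrow> layer list \<Rightarrow> bool" where
  "qt \<sigma> W n (m # ms) ((A, b) # Ls) =
     ((\<forall>i<m. (\<forall>j<n. qgrid \<sigma> W (A i j)) \<and> qgrid \<sigma> W (b i)) \<and> qt \<sigma> W m ms Ls)"
| "qt _ _ _ _ _ = True"

definition quantized :: "nat \<Rightarrow> nat \<Rightarrow> ('d::finite) network \<Rightarrow> bool" where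
  "quantized \<sigma> W \<Phi> = (case \<Phi> of (Ns, (A1, b1), Ls) \<Rightarrow>
     (\<forall>i<hd Ns. (\<forall>j. qgrid \<sigma> W (A1 i j)) \<and> qgrid \<sigma> W (b1 i)) \<and> qt \<sigma> W (hd Ns) (tl Ns) Ls)"

definition NNset :: "(real \<Rightarrow> real) \<Rightarrow> nat \<Rightarrow> nat \<Rightarrow> (real^'d::finite \<Rightarrow> real) set" where
  "NNset \<rho> \<sigma> W = {realize \<rho> \<Phi> | \<Phi>. nn_valid \<Phi> \<and> d_out \<Phi> = 1 \<and> quantized \<sigma> W \<Phi> \<and> nweights \<Phi> \<le> W}"

text \<open>L^2(Omega), represented by Borel measurable functions on real^'d.\<close>
definition L2set :: "(real^'d::finite) set \<Rightarrow> (real^'d \<Rightarrow> real) set" where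
  "L2set \<Omega> = {f. f \<in> borel_measurable lborel \<and> (\<integral>\<^sup>+ x\<in>\<Omega>. ennreal ((f x)\<^sup>2) \<partial>lborel) < \<infinity>}"

definition l2ball :: "(real^'d::finite) set \<Rightarrow> (real^'d \<Rightarrow> real) \<Rightarrow> real \<Rightarrow> (real^'d \<Rightarrow> real) set" where
  "l2ball \<Omega> g \<epsilon> = {f \<in> L2set \<Omega>. (\<integral>\<^sup>+ x\<in>\<Omega>. ennreal ((f x - g x)\<^sup>2) \<partial>lborel) \<le> ennreal (\<epsilon>\<^sup>2)}"

definition outer_prob :: "'a measure \<Rightarrow> 'a set \<Rightarrow> real" where
  "outer_prob P A = Inf {measure P B | B. B \<in> sets P \<and> A \<subseteq> B}"

text \<open>Standing setting: Omega a nonempty bounded domain, S a subset of L^2(Omega),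
  P a Borel probability measure on S (Borel sigma-algebra of S w.r.t. the
  L^2 metric, generated by the closed balls since L^2 is separable) which is
  critical with exponent s* > 0.\<close>
definition critical_setting ::
  "(real^'d::finite) set \<Rightarrow> (real^'d \<Rightarrow> real) set \<Rightarrow> (real^'d \<Rightarrow> real) measure \<Rightarrow> real \<Rightarrow> bool" where
  "critical_setting \<Omega> S P s_star =
    (\<Omega> \<noteq> {} \<and> open \<Omega> \<and> connected \<Omega> \<and> bounded \<Omega> \<and>
     S \<subseteq> L2set \<Omega> \<and> prob_space P \<and> space P = S \<and>
     sets P = sigma_sets S {S \<inter> l2ball \<Omega> g \<epsilon> | g \<epsilon>. g \<in> L2set \<Omega> \<and> \<epsilon> > 0} \<and>
     s_star > 0 \<and>
     (\<forall>s>s_star. \<exists>c>0. \<exists>\<epsilon>0>0. \<forall>g\<in>L2set \<Omega>. \<forall>\<epsilon>. 0 < \<epsilon> \<and> \<epsilon> < \<epsilon>0 \<longrightarrow>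
        measure P (S \<inter> l2ball \<Omega> g \<epsilon>) \<le> 2 powr (- c * \<epsilon> powr (-1 / s))))"

definition Weps :: "(real \<Rightarrow> real) \<Rightarrow> nat \<Rightarrow> (real^'d::finite) set \<Rightarrow> real \<Rightarrow> (real^'d \<Rightarrow> real) \<Rightarrow> enat" where
  "Weps \<rho> \<sigma> \<Omega> \<epsilon> f = (INF W \<in> {W. W \<ge> 1 \<and> (\<exists>g\<in>NNset \<rho> \<sigma> W. f \<in> l2ball \<Omega> g \<epsilon>)}. enat W)"

definition Astar :: "(real \<Rightarrow> real) \<Rightarrow> (real^'d::finite) set \<Rightarrow> (real^'d \<Rightarrow> real) set \<Rightarrow> real \<Rightarrow> (real^'d \<Rightarrow> real) set" where
  "Astar \<rho> \<Omega> S s_star = {f \<in> S. \<exists>\<tau>. 0 < \<tau> \<and> \<tau> < 1 / s_star \<and> (\<exists>\<sigma>::nat. \<sigma> \<ge> 1 \<and> (\<exists>C>0.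
      \<forall>\<epsilon>. 0 < \<epsilon> \<and> \<epsilon> < 1 \<longrightarrow>
        Weps \<rho> \<sigma> \<Omega> \<epsilon> f \<noteq> \<infinity> \<and> real (the_enat (Weps \<rho> \<sigma> \<Omega> \<epsilon> f)) \<le> C * \<epsilon> powr (- \<tau>)))}"

end

theory Submission
  imports Defs "HOL-Real_Asymp.Real_Asymp"
begin



datatype 'l rf = In 'l | Nd nat

type_synonym 'l node = "real \<times> (real \<times> 'l rf) list"

fun rv :: "(real \<Rightarrow> real) \<Rightarrow> ('l \<Rightarrow> real) \<Rightarrow> real list \<Rightarrow> 'l rf \<Rightarrow> real" where
  "rv \<rho> lf acc (In l) = lf l"
| "rv \<rho> lf acc (Nd u) = \<rho> (acc ! u)"

definition nv :: "(real \<Rightarrow> real) \<Rightarrow> ('l \<Rightarrow> real) \<Rightarrow> real list \<Rightarrow> 'l node \<Rightarrow> real" where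
  "nv \<rho> lf acc nd = fst nd + sum_list (map (\<lambda>(a,r). a * rv \<rho> lf acc r) (snd nd))"

fun vals :: "(real \<Rightarrow> real) \<Rightarrow> ('l \<Rightarrow> real) \<Rightarrow> real list \<Rightarrow> 'l node list \<Rightarrow> real list" where
  "vals \<rho> lf acc [] = acc"
| "vals \<rho> lf acc (nd # P) = vals \<rho> lf (acc @ [nv \<rho> lf acc nd]) P"

definition ev :: "(real \<Rightarrow> real) \<Rightarrow> ('l \<Rightarrow> real) \<Rightarrow> 'l node list \<Rightarrow> real" where
  "ev \<rho> lf P = last (vals \<rho> lf [] P)"

definition lvs :: "'l node list \<Rightarrow> 'l set" where
  "lvs P = {l. \<exists>nd\<in>set P. \<exists>a. (a, In l) \<in> set (snd nd)}"

definition edges :: "'l node list \<Rightarrow> nat" where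
  "edges P = sum_list (map (\<lambda>nd. length (snd nd)) P)"

definition shiftr :: "(nat \<Rightarrow> nat) \<Rightarrow> nat \<Rightarrow> nat rf \<Rightarrow> 'm rf" where
  "shiftr ix k r = (case r of In i \<Rightarrow> Nd (ix i) | Nd u \<Rightarrow> Nd (u + k))"

definition shiftn :: "(nat \<Rightarrow> nat) \<Rightarrow> nat \<Rightarrow> nat node \<Rightarrow> 'm node" where
  "shiftn ix k nd = (fst nd, map (\<lambda>(a,r). (a, shiftr ix k r)) (snd nd))"

definition subst :: "(nat \<Rightarrow> 'm node) \<Rightarrow> nat node list \<Rightarrow> 'm node list" where
  "subst N P = (let L = sorted_list_of_set (lvs P);
                    ix = (\<lambda>i. SOME k. k < length L \<and> L ! k = i)
                in map N L @ map (shiftn ix (length L)) P)"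

lemma length_vals: "length (vals \<rho> lf acc P) = length acc + length P"
  by (induction P arbitrary: acc) auto

lemma finite_lvs: "finite (lvs P)"
proof -
  have "lvs P \<subseteq> (\<Union>nd\<in>set P. (\<lambda>(a,r). case r of In l \<Rightarrow> l) ` set (snd nd))"
    unfolding lvs_def by (force)
  then show ?thesis by (rule finite_subset) auto
qed

lemma lvs_Cons: "lvs (nd # P) = {l. \<exists>a. (a, In l) \<in> set (snd nd)} \<union> lvs P"
  unfolding lvs_def by auto

lemma nv_shift:
  assumes "\<forall>i. (\<exists>a. (a, In i) \<in> set (snd nd)) \<longrightarrow> ix i < length acc0 \<and> lf i = \<rho> (acc0 ! ix i)"
  shows "nv \<rho> lf' (acc0 @ acc) (shiftn ix (length acc0) nd) = nv \<rho> lf acc nd"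
proof -
  have "map (\<lambda>(a, r). a * rv \<rho> lf' (acc0 @ acc) r) (map (\<lambda>(a,r). (a, shiftr ix (length acc0) r)) (snd nd))
        = map (\<lambda>(a, r). a * rv \<rho> lf acc r) (snd nd)"
    unfolding map_map
  proof (rule map_cong[OF refl])
    fix x assume x: "x \<in> set (snd nd)"
    obtain a r where xr: "x = (a, r)" by (cases x)
    show "((\<lambda>(a, r). a * rv \<rho> lf' (acc0 @ acc) r) \<circ> (\<lambda>(a, r). (a, shiftr ix (length acc0) r))) x =
          (\<lambda>(a, r). a * rv \<rho> lf acc r) x"
      using assms x unfolding xr by (cases r) (auto simp: shiftr_def nth_append)
  qed
  then show ?thesis by (simp only: nv_def shiftn_def fst_conv snd_conv)
qed

lemma vals_shift:
  assumes "\<forall>i\<in>lvs P. ix i < length acc0 \<and> lf i = \<rho> (acc0 ! ix i)"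
  shows "vals \<rho> lf' (acc0 @ acc) (map (shiftn ix (length acc0)) P) = acc0 @ vals \<rho> lf acc P"
  using assms
proof (induction P arbitrary: acc)
  case Nil
  then show ?case by simp
next
  case (Cons nd P)
  have "nv \<rho> lf' (acc0 @ acc) (shiftn ix (length acc0) nd) = nv \<rho> lf acc nd"
    by (rule nv_shift) (use Cons.prems in \<open>simp add: lvs_Cons\<close>)
  moreover have "\<forall>i\<in>lvs P. ix i < length acc0 \<and> lf i = \<rho> (acc0 ! ix i)"
    using Cons.prems by (simp add: lvs_Cons)
  note IH = Cons.IH[OF this, of "acc @ [nv \<rho> lf acc nd]"]
  ultimately show ?case by (simp only: list.map vals.simps append_assoc IH)
qed

definition inonly :: "'l node \<Rightarrow> bool" where
  "inonly nd = (\<forall>x\<in>set (snd nd). \<exists>a l. x = (a, In l))"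

lemma nv_inonly: "inonly nd \<Longrightarrow> nv \<rho> lf acc nd = nv \<rho> lf [] nd"
proof -
  assume a: "inonly nd"
  have M: "map (\<lambda>(a, r). a * rv \<rho> lf acc r) (snd nd) = map (\<lambda>(a, r). a * rv \<rho> lf [] r) (snd nd)"
  proof (rule map_cong[OF refl])
    fix x assume "x \<in> set (snd nd)"
    then obtain a l where "x = (a, In l)" using a unfolding inonly_def by blast
    then show "(\<lambda>(a, r). a * rv \<rho> lf acc r) x = (\<lambda>(a, r). a * rv \<rho> lf [] r) x" by simp
  qed
  show ?thesis unfolding nv_def M by (rule refl)
qed

lemma vals_inonly: "\<forall>i\<in>set L. inonly (N i) \<Longrightarrow>
   vals \<rho> lf acc (map N L) = acc @ map (\<lambda>i. nv \<rho> lf [] (N i)) L"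
proof (induction L arbitrary: acc)
  case Nil
  show ?case by simp
next
  case (Cons a L)
  have "nv \<rho> lf acc (N a) = nv \<rho> lf [] (N a)" using Cons.prems by (intro nv_inonly) simp
  then show ?case using Cons.IH Cons.prems by simp
qed

lemma vals_append: "vals \<rho> lf acc (P @ Q) = vals \<rho> lf (vals \<rho> lf acc P) Q"
  by (induction P arbitrary: acc) auto

lemma vals_last: "P \<noteq> [] \<Longrightarrow> last (acc0 @ vals \<rho> lf acc P) = last (vals \<rho> lf acc P)"
proof -
  assume "P \<noteq> []"
  then have "length (vals \<rho> lf acc P) \<noteq> 0" using length_vals[of \<rho> lf acc P] by simp
  then have "vals \<rho> lf acc P \<noteq> []" by (metis list.size(3))
  then show ?thesis by (rule last_appendR)
qed

lemma ev_subst: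
  assumes "P \<noteq> []" "\<forall>i. inonly (N i)"
  shows "ev \<rho> lf' (subst N P) = ev \<rho> (\<lambda>i. \<rho> (nv \<rho> lf' [] (N i))) P"
proof -
  define L where "L = sorted_list_of_set (lvs P)"
  define ix where "ix = (\<lambda>i. SOME k. k < length L \<and> L ! k = i)"
  define acc0 where "acc0 = map (\<lambda>i. nv \<rho> lf' [] (N i)) L"
  have ix: "ix i < length L \<and> L ! ix i = i" if "i \<in> lvs P" for i
  proof -
    have "i \<in> set L" using that finite_lvs[of P] by (simp add: L_def)
    then have "\<exists>k. k < length L \<and> L ! k = i" by (metis in_set_conv_nth)
    then show ?thesis unfolding ix_def by (rule someI_ex)
  qed
  have sub: "subst N P = map N L @ map (shiftn ix (length acc0)) P"
    unfolding subst_def L_def ix_def acc0_def by (simp add: Let_def)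
  have "vals \<rho> lf' [] (subst N P) = vals \<rho> lf' acc0 (map (shiftn ix (length acc0)) P)"
    unfolding sub vals_append acc0_def using vals_inonly[of L N \<rho> lf' "[]"] assms(2) by simp
  also have "\<dots> = acc0 @ vals \<rho> (\<lambda>i. \<rho> (nv \<rho> lf' [] (N i))) [] P"
    using vals_shift[of P ix acc0 "\<lambda>i. \<rho> (nv \<rho> lf' [] (N i))" \<rho> lf' "[]"] ix
    by (simp add: acc0_def)
  finally have V: "vals \<rho> lf' [] (subst N P) = acc0 @ vals \<rho> (\<lambda>i. \<rho> (nv \<rho> lf' [] (N i))) [] P" .
  show ?thesis unfolding ev_def V by (rule vals_last[OF assms(1)])
qed

definition gok :: "nat \<Rightarrow> nat \<Rightarrow> 'l node list \<Rightarrow> bool" where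
  "gok \<sigma> W P = (\<forall>nd\<in>set P. qgrid \<sigma> W (fst nd) \<and> (\<forall>x\<in>set (snd nd). qgrid \<sigma> W (fst x)))"

definition ndok :: "'l node list \<Rightarrow> bool" where
  "ndok P = (\<forall>nd\<in>set P. \<forall>x\<in>set (snd nd). \<forall>u. snd x = Nd u \<longrightarrow> u < length P)"

lemma subst_facts:
  fixes N :: "nat \<Rightarrow> 'm node"
  assumes inon: "\<forall>i. inonly (N i)"
  shows "length (subst N P) = card (lvs P) + length P"
    and "edges (subst N P) = (\<Sum>i\<in>lvs P. length (snd (N i))) + edges P"
    and "lvs (subst N P) \<subseteq> (\<Union>i\<in>lvs P. lvs [N i])"
    and "ndok P \<Longrightarrow> ndok (subst N P)"
    and "gok \<sigma> W P \<Longrightarrow> (\<forall>i\<in>lvs P. gok \<sigma> W [N i]) \<Longrightarrow> gok \<sigma> W (subst N P)"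
proof -
  define L where "L = sorted_list_of_set (lvs P)"
  define ix where "ix = (\<lambda>i. SOME k. k < length L \<and> L ! k = i)"
  have ix: "ix i < length L \<and> L ! ix i = i" if "i \<in> lvs P" for i
  proof -
    have "i \<in> set L" using that finite_lvs[of P] by (simp add: L_def)
    then have "\<exists>k. k < length L \<and> L ! k = i" by (metis in_set_conv_nth)
    then show ?thesis unfolding ix_def by (rule someI_ex)
  qed
  have sub: "subst N P = map N L @ map (shiftn ix (length L)) P"
    unfolding subst_def L_def ix_def by (simp add: Let_def)
  have setL: "set L = lvs P" and dL: "distinct L" and lL: "length L = card (lvs P)"
    using finite_lvs[of P] by (auto simp: L_def)
  show "length (subst N P) = card (lvs P) + length P"
    unfolding sub by (simp add: lL)
  have e1: "edges (map N L) = (\<Sum>i\<in>lvs P. length (snd (N i)))"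
    unfolding edges_def using dL setL by (simp add: comp_def) (metis sum_list_distinct_conv_sum_set)
  have e2: "edges (map (shiftn ix k) Q) = edges Q" for k and Q :: "nat node list"
    unfolding edges_def by (induction Q) (auto simp: shiftn_def)
  show "edges (subst N P) = (\<Sum>i\<in>lvs P. length (snd (N i))) + edges P"
    unfolding sub using e1 e2 by (simp add: edges_def)
  have l2: "lvs (map (shiftn ix k) Q :: 'm node list) = {}" for k and Q :: "nat node list"
    unfolding lvs_def by (auto simp: shiftn_def shiftr_def split: rf.splits)
  show "lvs (subst N P) \<subseteq> (\<Union>i\<in>lvs P. lvs [N i])"
  proof
    fix l assume "l \<in> lvs (subst N P)"
    then obtain nd a where nd: "nd \<in> set (subst N P)" "(a, In l) \<in> set (snd nd)" by (auto simp: lvs_def)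
    have nn: "nd \<notin> set (map (shiftn ix (length L)) P)"
    proof
      assume "nd \<in> set (map (shiftn ix (length L)) P)"
      then have "l \<in> lvs (map (shiftn ix (length L)) P)" using nd(2) unfolding lvs_def by blast
      then show False using l2[of "length L" P] by simp
    qed
    have "nd \<in> set (map N L)" using nd(1) nn unfolding sub by simp
    then obtain i where i: "i \<in> set L" "nd = N i" by auto
    have "l \<in> lvs [N i]" using nd(2) i(2) unfolding lvs_def by auto
    then show "l \<in> (\<Union>i\<in>lvs P. lvs [N i])" using setL i(1) by blast
  qed
  show "ndok P \<Longrightarrow> ndok (subst N P)"
  proof -
    assume nd: "ndok P"
    show "ndok (subst N P)" unfolding ndok_def
    proof (intro ballI allI impI)
      fix nd x u assume nd_in: "nd \<in> set (subst N P)" and x: "x \<in> set (snd nd)" and xu: "snd x = Nd u"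
      show "u < length (subst N P)"
      proof (cases "nd \<in> set (map N L)")
        case True
        then obtain i where "nd = N i" by auto
        then show ?thesis using inon x xu unfolding inonly_def by fastforce
      next
        case False
        then obtain nd0 where nd0: "nd0 \<in> set P" "nd = shiftn ix (length L) nd0" using nd_in sub by auto
        then obtain a r where ar: "(a, r) \<in> set (snd nd0)" "x = (a, shiftr ix (length L) r)"
          using x by (auto simp: shiftn_def)
        show ?thesis
        proof (cases r)
          case (In i)
          then have "i \<in> lvs P" using ar nd0 by (auto simp: lvs_def)
          then show ?thesis using ix[of i] xu ar In by (auto simp: shiftr_def sub)
        next
          case (Nd v)
          then have "v < length P" using nd ar nd0 unfolding ndok_def by fastforce
          then show ?thesis using xu ar Nd by (auto simp: shiftr_def sub)
        qed
      qed
    qed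
  qed
  show "gok \<sigma> W P \<Longrightarrow> (\<forall>i\<in>lvs P. gok \<sigma> W [N i]) \<Longrightarrow> gok \<sigma> W (subst N P)"
  proof -
    assume g1: "gok \<sigma> W P" and g2: "\<forall>i\<in>lvs P. gok \<sigma> W [N i]"
    show "gok \<sigma> W (subst N P)" unfolding gok_def sub
    proof
      fix nd assume "nd \<in> set (map N L @ map (shiftn ix (length L)) P)"
      then consider (a) i where "i \<in> set L" "nd = N i"
        | (b) nd0 where "nd0 \<in> set P" "nd = shiftn ix (length L) nd0" by auto
      then show "qgrid \<sigma> W (fst nd) \<and> (\<forall>x\<in>set (snd nd). qgrid \<sigma> W (fst x))"
      proof cases
        case a
        then have "gok \<sigma> W [N i]" using g2 setL by blast
        then show ?thesis using a(2) unfolding gok_def by simp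
      next
        case b
        then have g: "qgrid \<sigma> W (fst nd0) \<and> (\<forall>x\<in>set (snd nd0). qgrid \<sigma> W (fst x))"
          using g1 unfolding gok_def by blast
        have "\<forall>x\<in>set (snd nd). qgrid \<sigma> W (fst x)"
        proof
          fix x assume "x \<in> set (snd nd)"
          then obtain y where "y \<in> set (snd nd0)" "x = (\<lambda>(a,r). (a, shiftr ix (length L) r)) y"
            using b(2) by (auto simp: shiftn_def)
          then have "fst x = fst y" by (simp add: case_prod_beta)
          then show "qgrid \<sigma> W (fst x)" using g \<open>y \<in> set (snd nd0)\<close> by simp
        qed
        then show ?thesis using g b(2) by (simp add: shiftn_def)
      qed
    qed
  qed
qed




definition Nh :: "(nat \<Rightarrow> nat \<Rightarrow> real) \<Rightarrow> (nat \<Rightarrow> real) \<Rightarrow> nat \<Rightarrow> nat \<Rightarrow> nat node" where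
  "Nh A b n i = (b i, map (\<lambda>j. (A i j, In j)) (filter (\<lambda>j. A i j \<noteq> 0) [0..<n]))"

lemma sum_list_filter_if: "sum_list (map f (filter P xs)) = sum_list (map (\<lambda>x. if P x then f x else 0) xs)"
  by (induction xs) auto

lemma nv_Nh: "nv \<rho> lf acc (Nh A b n i) = (\<Sum>j<n. A i j * lf j) + b i"
proof -
  have "sum_list (map (\<lambda>(a, r). a * rv \<rho> lf acc r) (map (\<lambda>j. (A i j, In j)) (filter (\<lambda>j. A i j \<noteq> 0) [0..<n])))
      = sum_list (map (\<lambda>j. A i j * lf j) (filter (\<lambda>j. A i j \<noteq> 0) [0..<n]))"
    by (simp add: comp_def)
  also have "\<dots> = sum_list (map (\<lambda>j. if A i j \<noteq> 0 then A i j * lf j else 0) [0..<n])"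
    by (rule sum_list_filter_if)
  also have "\<dots> = sum_list (map (\<lambda>j. A i j * lf j) [0..<n])"
    by (rule arg_cong[where f=sum_list]) auto
  also have "\<dots> = (\<Sum>j<n. A i j * lf j)"
    by (metis atLeast0LessThan set_upt sum_set_upt_conv_sum_list_nat)
  finally show ?thesis unfolding nv_def Nh_def by simp
qed

lemma inonly_Nh: "inonly (Nh A b n i)"
  unfolding inonly_def Nh_def by auto

lemma lvs_Nh: "lvs [Nh A b n i] = {j. j < n \<and> A i j \<noteq> 0}"
  unfolding lvs_def Nh_def by auto

lemma len_Nh: "length (snd (Nh A b n i)) = card {j. j < n \<and> A i j \<noteq> 0}"
proof -
  have "length (filter (\<lambda>j. A i j \<noteq> 0) [0..<n]) = card {j. j < n \<and> A i j \<noteq> 0}"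
  proof -
    have "length (filter (\<lambda>j. A i j \<noteq> 0) [0..<n]) = card ({j. A i j \<noteq> 0} \<inter> set [0..<n])"
      by (rule distinct_length_filter) simp
    also have "{j. A i j \<noteq> 0} \<inter> set [0..<n] = {j. j < n \<and> A i j \<noteq> 0}" by auto
    finally show ?thesis .
  qed
  then show ?thesis unfolding Nh_def by simp
qed

lemma card_rows:
  fixes m n :: nat and I :: "nat set" and A :: "nat \<Rightarrow> nat \<Rightarrow> real"
  assumes "I \<subseteq> {..<m}"
  shows "(\<Sum>i\<in>I. card {j. j < n \<and> A i j \<noteq> 0}) \<le> card {(i, j). i < m \<and> j < n \<and> A i j \<noteq> (0::real)}"
proof -
  have fI: "finite I" by (rule finite_subset[OF assms]) simp
  have "(\<Sum>i\<in>I. card {j. j < n \<and> A i j \<noteq> 0}) = card (Sigma I (\<lambda>i. {j. j < n \<and> A i j \<noteq> 0}))"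
    by (rule card_SigmaI[symmetric]) (use fI in auto)
  also have "\<dots> \<le> card {(i, j). i < m \<and> j < n \<and> A i j \<noteq> (0::real)}"
  proof (rule card_mono)
    show "finite {(i, j). i < m \<and> j < n \<and> A i j \<noteq> (0::real)}"
      by (rule finite_subset[of _ "{..<m} \<times> {..<n}"]) auto
    show "Sigma I (\<lambda>i. {j. j < n \<and> A i j \<noteq> 0}) \<subseteq> {(i, j). i < m \<and> j < n \<and> A i j \<noteq> 0}"
      using assms by auto
  qed
  finally show ?thesis .
qed

lemma card_UN_le_sum: "finite I \<Longrightarrow> card (\<Union>i\<in>I. B i) \<le> (\<Sum>i\<in>I. card (B i))"
  by (rule card_UN_le)

lemma rt_prog:
  "length ms = length Ls \<Longrightarrow> Ls \<noteq> [] \<Longrightarrow> qt \<sigma> W n ms Ls \<Longrightarrow> 0 < last ms \<Longrightarrow>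
   \<exists>P. (\<forall>z. rt \<rho> n z ms Ls 0 = ev \<rho> (\<lambda>j. \<rho> (z j)) P) \<and> P \<noteq> [] \<and>
       length P + card (lvs P) \<le> edges P + 1 \<and> edges P \<le> wt n ms Ls \<and> lvs P \<subseteq> {..<n} \<and>
       gok \<sigma> W P \<and> ndok P"
proof (induction Ls arbitrary: n ms)
  case Nil
  then show ?case by simp
next
  case (Cons Ab Ls)
  obtain A b where Ab: "Ab = (A, b)" by (cases Ab)
  obtain m ms' where ms: "ms = m # ms'" using Cons.prems(1) by (cases ms) auto
  have q1: "\<forall>i<m. (\<forall>j<n. qgrid \<sigma> W (A i j)) \<and> qgrid \<sigma> W (b i)" and q2: "qt \<sigma> W m ms' Ls"
    using Cons.prems(3) by (simp_all add: Ab ms)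
  have wt: "wt n ms (Ab # Ls) = card {(i, j). i < m \<and> j < n \<and> A i j \<noteq> 0} + card {i. i < m \<and> b i \<noteq> 0} + wt m ms' Ls"
    by (simp add: Ab ms)
  show ?case
  proof (cases "Ls = []")
    case True
    then have ms': "ms' = []" using Cons.prems(1) ms by simp
    then have m0: "0 < m" using Cons.prems(4) ms by simp
    define P where "P = [Nh A b n 0]"
    have "rt \<rho> n z ms (Ab # Ls) 0 = ev \<rho> (\<lambda>j. \<rho> (z j)) P" for z
      by (simp add: Ab ms ms' True P_def ev_def nv_Nh)
    moreover have "edges P = card {j. j < n \<and> A 0 j \<noteq> 0}"
      by (simp add: P_def edges_def len_Nh)
    moreover have "lvs P = {j. j < n \<and> A 0 j \<noteq> 0}" by (simp add: P_def lvs_Nh)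
    moreover have "card {j. j < n \<and> A 0 j \<noteq> 0} \<le> card {(i, j). i < m \<and> j < n \<and> A i j \<noteq> 0}"
      using card_rows[of "{0}" m n A] m0 by simp
    moreover have "gok \<sigma> W P" using q1 m0 by (auto simp: gok_def P_def Nh_def)
    moreover have "ndok P" by (auto simp: ndok_def P_def Nh_def)
    ultimately show ?thesis using wt by (intro exI[of _ P]) (auto simp: P_def)
  next
    case False
    have "0 < last ms'" using Cons.prems(4) ms False Cons.prems(1) by (cases ms') auto
    then obtain P0 where P0: "\<forall>z. rt \<rho> m z ms' Ls 0 = ev \<rho> (\<lambda>j. \<rho> (z j)) P0" "P0 \<noteq> []"
       "length P0 + card (lvs P0) \<le> edges P0 + 1" "edges P0 \<le> wt m ms' Ls" "lvs P0 \<subseteq> {..<m}"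
       "gok \<sigma> W P0" "ndok P0"
      using Cons.IH[of ms' m] Cons.prems(1) ms False q2 by auto
    define P where "P = subst (Nh A b n) P0"
    have F: "length P = card (lvs P0) + length P0"
       "edges P = (\<Sum>i\<in>lvs P0. length (snd (Nh A b n i))) + edges P0"
       "lvs P \<subseteq> (\<Union>i\<in>lvs P0. lvs [Nh A b n i])"
       "ndok P"
      using subst_facts[where N="Nh A b n" and P=P0] inonly_Nh P0(7) unfolding P_def by auto
    have "gok \<sigma> W P" unfolding P_def
    proof (rule subst_facts(5))
      show "\<forall>i. inonly (Nh A b n i)" by (simp add: inonly_Nh)
      show "gok \<sigma> W P0" by fact
      show "\<forall>i\<in>lvs P0. gok \<sigma> W [Nh A b n i]"
        using q1 P0(5) by (auto simp: gok_def Nh_def)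
    qed
    have S: "(\<Sum>i\<in>lvs P0. length (snd (Nh A b n i))) \<le> card {(i, j). i < m \<and> j < n \<and> A i j \<noteq> 0}"
      using card_rows[OF P0(5), of n A] by (simp add: len_Nh)
    have cl: "card (lvs P) \<le> (\<Sum>i\<in>lvs P0. length (snd (Nh A b n i)))"
    proof -
      have "card (lvs P) \<le> card (\<Union>i\<in>lvs P0. lvs [Nh A b n i])"
        by (rule card_mono[OF _ F(3)]) (auto simp: lvs_Nh finite_lvs)
      also have "\<dots> \<le> (\<Sum>i\<in>lvs P0. card (lvs [Nh A b n i]))"
        by (rule card_UN_le) (simp add: finite_lvs)
      finally show ?thesis by (simp add: lvs_Nh len_Nh)
    qed
    have ev: "rt \<rho> n z ms (Ab # Ls) 0 = ev \<rho> (\<lambda>j. \<rho> (z j)) P" for z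
    proof -
      have "ev \<rho> (\<lambda>j. \<rho> (z j)) P = ev \<rho> (\<lambda>i. \<rho> (nv \<rho> (\<lambda>j. \<rho> (z j)) [] (Nh A b n i))) P0"
        unfolding P_def by (rule ev_subst[OF P0(2)]) (simp add: inonly_Nh)
      also have "\<dots> = rt \<rho> m (\<lambda>i. (\<Sum>j<n. A i j * \<rho> (z j)) + b i) ms' Ls 0"
        using P0(1) by (simp add: nv_Nh)
      finally show ?thesis by (simp add: Ab ms)
    qed
    have lv: "lvs P \<subseteq> {..<n}" using F(3) by (auto simp: lvs_Nh)
    have "P \<noteq> []" using F(1) P0(2) by auto
    then show ?thesis using ev lv F P0 S cl wt \<open>gok \<sigma> W P\<close>
      by (intro exI[of _ P]) auto
  qed
qed




definition enumd :: "'d::finite list" where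
  "enumd = (SOME xs. set xs = UNIV \<and> distinct xs)"

lemma enumd: "set (enumd :: 'd::finite list) = UNIV \<and> distinct (enumd :: 'd list)"
proof -
  have "\<exists>xs::'d list. set xs = UNIV \<and> distinct xs" using finite_distinct_list[of "UNIV :: 'd set"] by simp
  then show ?thesis unfolding enumd_def by (rule someI_ex)
qed

definition N1 :: "(nat \<Rightarrow> 'd::finite \<Rightarrow> real) \<Rightarrow> (nat \<Rightarrow> real) \<Rightarrow> nat \<Rightarrow> 'd node" where
  "N1 A b i = (b i, map (\<lambda>j. (A i j, In j)) (filter (\<lambda>j. A i j \<noteq> 0) enumd))"

lemma nv_N1: "nv \<rho> lf acc (N1 A b i) = (\<Sum>j\<in>UNIV. A i j * lf j) + b i"
proof -
  have "sum_list (map (\<lambda>(a, r). a * rv \<rho> lf acc r) (map (\<lambda>j. (A i j, In j)) (filter (\<lambda>j. A i j \<noteq> 0) enumd)))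
      = sum_list (map (\<lambda>j. A i j * lf j) (filter (\<lambda>j. A i j \<noteq> 0) enumd))"
    by (simp add: comp_def)
  also have "\<dots> = sum_list (map (\<lambda>j. if A i j \<noteq> 0 then A i j * lf j else 0) enumd)"
    by (rule sum_list_filter_if)
  also have "\<dots> = sum_list (map (\<lambda>j. A i j * lf j) enumd)"
    by (rule arg_cong[where f=sum_list]) auto
  also have "\<dots> = (\<Sum>j\<in>UNIV. A i j * lf j)"
    using enumd by (metis sum_list_distinct_conv_sum_set)
  finally show ?thesis unfolding nv_def N1_def by simp
qed

lemma inonly_N1: "inonly (N1 A b i)"
  unfolding inonly_def N1_def by auto

lemma lvs_N1: "lvs [N1 A b i] = {j. A i j \<noteq> 0}"
  unfolding lvs_def N1_def using enumd by auto

lemma len_N1: "length (snd (N1 A b i)) = card {j. A i j \<noteq> 0}"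
proof -
  have "length (filter (\<lambda>j. A i j \<noteq> 0) enumd) = card ({j. A i j \<noteq> 0} \<inter> set enumd)"
    by (rule distinct_length_filter) (simp add: enumd)
  also have "{j. A i j \<noteq> 0} \<inter> set enumd = {j. A i j \<noteq> 0}" by (simp add: enumd)
  finally show ?thesis unfolding N1_def by simp
qed

lemma card_rows1:
  fixes m :: nat and I :: "nat set" and A :: "nat \<Rightarrow> 'd::finite \<Rightarrow> real"
  assumes "I \<subseteq> {..<m}"
  shows "(\<Sum>i\<in>I. card {j. A i j \<noteq> 0}) \<le> card {(i, j). i < m \<and> A i j \<noteq> 0}"
proof -
  have fI: "finite I" by (rule finite_subset[OF assms]) simp
  have "(\<Sum>i\<in>I. card {j. A i j \<noteq> 0}) = card (Sigma I (\<lambda>i. {j. A i j \<noteq> 0}))"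
    by (rule card_SigmaI[symmetric]) (use fI in auto)
  also have "\<dots> \<le> card {(i, j). i < m \<and> A i j \<noteq> 0}"
  proof (rule card_mono)
    show "finite {(i, j). i < m \<and> A i j \<noteq> 0}"
      by (rule finite_subset[of _ "{..<m} \<times> UNIV"]) auto
    show "Sigma I (\<lambda>i. {j. A i j \<noteq> 0}) \<subseteq> {(i, j). i < m \<and> A i j \<noteq> 0}"
      using assms by auto
  qed
  finally show ?thesis .
qed

definition Progs :: "nat \<Rightarrow> nat \<Rightarrow> ('d::finite) node list set" where
  "Progs \<sigma> W = {P. length P \<le> W + 1 \<and> edges P \<le> W \<and> gok \<sigma> W P \<and> ndok P}"

lemma net_prog:
  fixes \<Phi> :: "('d::finite) network"
  assumes "nn_valid \<Phi>" "d_out \<Phi> = 1" "quantized \<sigma> W \<Phi>" "nweights \<Phi> \<le> W"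
  shows "\<exists>P\<in>Progs \<sigma> W. realize \<rho> \<Phi> = (\<lambda>x. ev \<rho> (\<lambda>j. x $ j) P)"
proof -
  obtain Ns A1 b1 Ls where Phi: "\<Phi> = (Ns, (A1, b1), Ls)" by (cases \<Phi>) auto
  have len: "length Ns = Suc (length Ls)" using assms(1) by (simp add: nn_valid_def Phi)
  then obtain h ms where Ns: "Ns = h # ms" by (cases Ns) auto
  have lms: "length ms = length Ls" using len Ns by simp
  have last1: "last Ns = 1" using assms(2) by (simp add: d_out_def Phi)
  have qa: "\<forall>i<h. (\<forall>j. qgrid \<sigma> W (A1 i j)) \<and> qgrid \<sigma> W (b1 i)" and qb: "qt \<sigma> W h ms Ls"
    using assms(3) by (simp_all add: quantized_def Phi Ns)
  have nw: "card {(i, j). i < h \<and> A1 i j \<noteq> 0} + card {i. i < h \<and> b1 i \<noteq> 0} + wt h ms Ls \<le> W"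
    using assms(4) by (simp add: nweights_def Phi Ns)
  define z1 where "z1 x = (\<lambda>i. (\<Sum>j\<in>UNIV. A1 i j * x $ j) + b1 i)" for x :: "real^'d"
  have re: "realize \<rho> \<Phi> x = rt \<rho> h (z1 x) ms Ls 0" for x
    by (simp add: realize_def Phi Ns z1_def)
  have nvz: "nv \<rho> (\<lambda>j. x $ j) [] (N1 A1 b1 i) = z1 x i" for x i
    by (simp add: nv_N1 z1_def)
  show ?thesis
  proof (cases "Ls = []")
    case True
    then have ms: "ms = []" using lms by simp
    then have h1: "h = 1" using last1 Ns by simp
    define P where "P = [N1 A1 b1 0]"
    have "edges P = card {j. A1 0 j \<noteq> 0}" by (simp add: P_def edges_def len_N1)
    also have "\<dots> \<le> card {(i, j). i < h \<and> A1 i j \<noteq> 0}"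
      using card_rows1[of "{0}" h A1] h1 by simp
    finally have e: "edges P \<le> W" using nw by linarith
    have "gok \<sigma> W P" using qa h1 by (auto simp: gok_def P_def N1_def)
    moreover have "ndok P" by (auto simp: ndok_def P_def N1_def)
    moreover have "length P \<le> W + 1" by (simp add: P_def)
    ultimately have PP: "P \<in> Progs \<sigma> W" using e by (simp add: Progs_def)
    have "realize \<rho> \<Phi> x = ev \<rho> (\<lambda>j. x $ j) P" for x
      unfolding re by (simp add: True ms P_def ev_def nvz)
    then show ?thesis using PP by blast
  next
    case False
    have "ms \<noteq> []" using False lms by auto
    then have "0 < last ms" using last1 Ns by simp
    then obtain P0 where P0: "\<forall>z. rt \<rho> h z ms Ls 0 = ev \<rho> (\<lambda>j. \<rho> (z j)) P0" "P0 \<noteq> []"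
       "length P0 + card (lvs P0) \<le> edges P0 + 1" "edges P0 \<le> wt h ms Ls" "lvs P0 \<subseteq> {..<h}"
       "gok \<sigma> W P0" "ndok P0"
      using rt_prog[OF lms False qb, of \<rho>] by blast
    define P where "P = subst (N1 A1 b1) P0"
    have inon: "\<forall>i. inonly (N1 A1 b1 i)" by (simp add: inonly_N1)
    have F: "length P = card (lvs P0) + length P0"
       "edges P = (\<Sum>i\<in>lvs P0. length (snd (N1 A1 b1 i))) + edges P0"
       "ndok P"
      using subst_facts(1,2)[where N="N1 A1 b1" and P=P0, OF inon]
        subst_facts(4)[where N="N1 A1 b1" and P=P0, OF inon P0(7)] unfolding P_def by auto
    have "gok \<sigma> W P" unfolding P_def
    proof (rule subst_facts(5))
      show "\<forall>i. inonly (N1 A1 b1 i)" by (simp add: inonly_N1)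
      show "gok \<sigma> W P0" by fact
      show "\<forall>i\<in>lvs P0. gok \<sigma> W [N1 A1 b1 i]"
        using qa P0(5) by (auto simp: gok_def N1_def)
    qed
    have S: "(\<Sum>i\<in>lvs P0. length (snd (N1 A1 b1 i))) \<le> card {(i, j). i < h \<and> A1 i j \<noteq> 0}"
      using card_rows1[OF P0(5), of A1] by (simp add: len_N1)
    have e: "edges P \<le> W" using F(2) S P0(4) nw by linarith
    have l: "length P \<le> W + 1" using F(1) P0(3) e F(2) by linarith
    have PP: "P \<in> Progs \<sigma> W" using e l F(3) \<open>gok \<sigma> W P\<close> by (simp add: Progs_def)
    have "realize \<rho> \<Phi> x = ev \<rho> (\<lambda>j. x $ j) P" for x
    proof -
      have "ev \<rho> (\<lambda>j. x $ j) P = ev \<rho> (\<lambda>i. \<rho> (nv \<rho> (\<lambda>j. x $ j) [] (N1 A1 b1 i))) P0"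
        unfolding P_def by (rule ev_subst[OF P0(2)]) (simp add: inonly_N1)
      also have "\<dots> = rt \<rho> h (z1 x) ms Ls 0"
        using P0(1) by (simp add: nvz)
      finally show ?thesis by (simp add: re)
    qed
    then show ?thesis using PP by blast
  qed
qed




datatype 'l tok = TB real | TE real "'l rf"

definition tg :: "real \<times> 'l rf \<Rightarrow> 'l tok" where
  "tg x = TE (fst x) (snd x)"

definition flat :: "'l node list \<Rightarrow> 'l tok list" where
  "flat P = concat (map (\<lambda>nd. TB (fst nd) # map tg (snd nd)) P)"

lemma flat_Nil[simp]: "flat [] = []" by (simp add: flat_def)
lemma flat_Cons[simp]: "flat (nd # P) = TB (fst nd) # map tg (snd nd) @ flat P"
  by (simp add: flat_def)

definition okr :: "'l tok list \<Rightarrow> bool" where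
  "okr R = (R = [] \<or> (\<exists>b t. R = TB b # t))"

lemma okr_flat: "okr (flat P)"
  by (cases P) (auto simp: okr_def)

lemma split_unique:
  "map tg E @ R = map tg E' @ R' \<Longrightarrow> okr R \<Longrightarrow> okr R' \<Longrightarrow> E = E' \<and> R = R'"
proof (induction E arbitrary: E')
  case Nil
  show ?case
  proof (cases E')
    case Nil
    then show ?thesis using Nil.prems by simp
  next
    case (Cons y E'')
    then show ?thesis using Nil.prems by (auto simp: okr_def tg_def)
  qed
next
  case (Cons x E)
  show ?case
  proof (cases E')
    case Nil
    then show ?thesis using Cons.prems by (auto simp: okr_def tg_def)
  next
    case (Cons y E'')
    have "tg x = tg y" "map tg E @ R = map tg E'' @ R'" using Cons.prems Cons by auto
    then have "x = y" by (cases x, cases y) (simp add: tg_def)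
    moreover have "E = E'' \<and> R = R'" using Cons.IH[OF \<open>map tg E @ R = map tg E'' @ R'\<close>] Cons.prems by blast
    ultimately show ?thesis using Cons by simp
  qed
qed

lemma flat_inj: "flat P = flat Q \<Longrightarrow> P = Q"
proof (induction P arbitrary: Q)
  case Nil
  then show ?case by (cases Q) auto
next
  case (Cons nd P)
  then obtain nd' Q' where Q: "Q = nd' # Q'" by (cases Q) auto
  have e: "fst nd = fst nd'" "map tg (snd nd) @ flat P = map tg (snd nd') @ flat Q'"
    using Cons.prems Q by auto
  have "snd nd = snd nd' \<and> flat P = flat Q'" by (rule split_unique[OF e(2) okr_flat okr_flat])
  then show ?case using Cons.IH e(1) Q by (cases nd, cases nd') auto
qed

lemma length_flat: "length (flat P) = length P + edges P"
  by (induction P) (auto simp: edges_def)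

definition Gs :: "nat \<Rightarrow> nat \<Rightarrow> real set" where
  "Gs \<sigma> W = {x. qgrid \<sigma> W x}"

definition Tset :: "nat \<Rightarrow> nat \<Rightarrow> 'l tok set" where
  "Tset \<sigma> W = TB ` Gs \<sigma> W \<union> tg ` (Gs \<sigma> W \<times> (range In \<union> Nd ` {..<W+1}))"

lemma flat_in:
  assumes "P \<in> Progs \<sigma> W"
  shows "set (flat P) \<subseteq> Tset \<sigma> W \<and> length (flat P) \<le> 2 * W + 1"
proof
  show "length (flat P) \<le> 2 * W + 1" using assms by (simp add: length_flat Progs_def)
  have g: "gok \<sigma> W P" and n: "ndok P" and l: "length P \<le> W + 1" using assms by (auto simp: Progs_def)
  show "set (flat P) \<subseteq> Tset \<sigma> W"
  proof
    fix t assume "t \<in> set (flat P)"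
    then obtain nd where nd: "nd \<in> set P" "t \<in> set (TB (fst nd) # map tg (snd nd))"
      by (auto simp: flat_def)
    have g1: "qgrid \<sigma> W (fst nd)" "\<forall>x\<in>set (snd nd). qgrid \<sigma> W (fst x)" using g nd(1) by (auto simp: gok_def)
    have n1: "\<forall>x\<in>set (snd nd). \<forall>u. snd x = Nd u \<longrightarrow> u < W + 1" using n nd(1) l unfolding ndok_def by fastforce
    show "t \<in> Tset \<sigma> W"
    proof (cases "t = TB (fst nd)")
      case True
      then show ?thesis using g1 by (simp add: Tset_def Gs_def)
    next
      case False
      then obtain x where x: "x \<in> set (snd nd)" "t = tg x" using nd(2) by auto
      have "snd x \<in> range In \<union> Nd ` {..<W+1}"
        using n1 x(1) by (cases "snd x") auto
      then have "x \<in> Gs \<sigma> W \<times> (range In \<union> Nd ` {..<W+1})"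
        using g1 x(1) by (cases x) (auto simp: Gs_def)
      then show ?thesis using x(2) by (simp add: Tset_def)
    qed
  qed
qed




lemma W_le_pow:
  assumes "W \<ge> (1::nat)"
  shows "real W \<le> 2 ^ nat \<lceil>log 2 (real W)\<rceil>"
proof -
  have "log 2 (real W) \<ge> 0" using assms by simp
  then have "log 2 (real W) \<le> real (nat \<lceil>log 2 (real W)\<rceil>)" by linarith
  then have "real W \<le> 2 powr real (nat \<lceil>log 2 (real W)\<rceil>)"
    using assms by (subst (asm) log_le_iff) auto
  then show ?thesis by (simp add: powr_realpow)
qed

lemma k_le_K:
  assumes "W \<ge> (1::nat)"
  shows "nat \<lceil>log 2 (real W)\<rceil> \<le> nat \<lceil>log 2 (1 + real W)\<rceil>"
proof -
  have "log 2 (real W) \<le> log 2 (1 + real W)" using assms by simp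
  then show ?thesis by (intro nat_mono ceiling_mono)
qed

lemma K_ge1:
  assumes "W \<ge> (1::nat)"
  shows "1 \<le> nat \<lceil>log 2 (1 + real W)\<rceil>"
proof -
  have "1 \<le> log 2 (1 + real W)" using assms by simp
  then show ?thesis by linarith
qed

lemma W1_le_pow:
  assumes "W \<ge> (1::nat)"
  shows "W + 1 \<le> 2 ^ nat \<lceil>log 2 (1 + real W)\<rceil>"
proof -
  define K where "K = nat \<lceil>log 2 (1 + real W)\<rceil>"
  have "log 2 (1 + real W) \<ge> 0" using assms by simp
  then have "log 2 (1 + real W) \<le> real K" unfolding K_def by linarith
  then have "1 + real W \<le> 2 powr real K"
    by (subst (asm) log_le_iff) auto
  also have "2 powr real K = 2 ^ K" by (simp add: powr_realpow)
  finally have "real (W + 1) \<le> real ((2::nat) ^ K)" by simp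
  then show ?thesis unfolding K_def by linarith
qed

lemma grid_card:
  assumes "W \<ge> (1::nat)"
  shows "finite (Gs \<sigma> W) \<and> card (Gs \<sigma> W) \<le> 2 ^ (2 * \<sigma> * (nat \<lceil>log 2 (1 + real W)\<rceil>)\<^sup>2 + 2)"
proof -
  define k where "k = nat \<lceil>log 2 (real W)\<rceil>"
  define K where "K = nat \<lceil>log 2 (1 + real W)\<rceil>"
  define M :: int where "M = 2 ^ (2 * \<sigma> * k\<^sup>2)"
  define f :: "int \<Rightarrow> real" where "f m = real_of_int m / 2 ^ (\<sigma> * k\<^sup>2)" for m
  have Wk: "real W \<le> 2 ^ k" unfolding k_def by (rule W_le_pow[OF assms])
  have sub: "Gs \<sigma> W \<subseteq> f ` {-M..M}"
  proof
    fix x assume "x \<in> Gs \<sigma> W"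
    then have x1: "\<bar>x\<bar> \<le> real W ^ (\<sigma> * k)" and x2: "x * 2 ^ (\<sigma> * k\<^sup>2) \<in> \<int>"
      by (simp_all add: Gs_def qgrid_def k_def Let_def)
    from x2 obtain m where m: "x * 2 ^ (\<sigma> * k\<^sup>2) = real_of_int m" by (auto elim: Ints_cases)
    have "\<bar>real_of_int m\<bar> = \<bar>x\<bar> * 2 ^ (\<sigma> * k\<^sup>2)" by (simp flip: m add: abs_mult)
    also have "\<dots> \<le> real W ^ (\<sigma> * k) * 2 ^ (\<sigma> * k\<^sup>2)" using x1 by (simp add: mult_right_mono)
    also have "\<dots> \<le> (2 ^ k) ^ (\<sigma> * k) * 2 ^ (\<sigma> * k\<^sup>2)"
      by (intro mult_right_mono power_mono Wk) auto
    also have "\<dots> = 2 ^ (2 * \<sigma> * k\<^sup>2)"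
      by (simp add: power_mult[symmetric] power_add[symmetric] power2_eq_square algebra_simps)
    finally have "\<bar>real_of_int m\<bar> \<le> real_of_int M" by (simp add: M_def)
    then have "m \<in> {-M..M}" by auto
    moreover have "x = f m" unfolding f_def using m by (simp add: field_simps)
    ultimately show "x \<in> f ` {-M..M}" by blast
  qed
  have fin: "finite (Gs \<sigma> W)" by (rule finite_subset[OF sub]) simp
  have "card (Gs \<sigma> W) \<le> card (f ` {-M..M})" by (rule card_mono[OF _ sub]) simp
  also have "\<dots> \<le> card {-M..M}" by (rule card_image_le) simp
  also have "\<dots> = nat (2 * M + 1)" by simp
  also have "\<dots> \<le> 4 * 2 ^ (2 * \<sigma> * k\<^sup>2)"
  proof -
    have "M \<ge> 1" by (simp add: M_def)
    then have "2 * M + 1 \<le> 4 * M" by linarith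
    then have "nat (2 * M + 1) \<le> nat (4 * M)" by simp
    also have "nat (4 * M) = 4 * 2 ^ (2 * \<sigma> * k\<^sup>2)" by (simp add: M_def nat_mult_distrib nat_power_eq)
    finally show ?thesis .
  qed
  also have "\<dots> = 2 ^ (2 * \<sigma> * k\<^sup>2 + 2)" by (simp add: power_add)
  also have "\<dots> \<le> 2 ^ (2 * \<sigma> * K\<^sup>2 + 2)"
  proof -
    have "k \<le> K" unfolding k_def K_def by (rule k_le_K[OF assms])
    then have "k\<^sup>2 \<le> K\<^sup>2" by (simp add: power_mono)
    then show ?thesis by (intro power_increasing) auto
  qed
  finally show ?thesis using fin by (simp add: K_def)
qed




lemma geom_le: "(\<Sum>i\<le>n. (c::nat) ^ i) \<le> (c + 1) ^ n"
proof (induction n)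
  case 0
  then show ?case by simp
next
  case (Suc n)
  have "c ^ Suc n = c * c ^ n" by simp
  also have "\<dots> \<le> c * (c + 1) ^ n" by (intro mult_left_mono power_mono) auto
  finally have cs: "c ^ Suc n \<le> c * (c + 1) ^ n" .
  have "(\<Sum>i\<le>Suc n. c ^ i) = (\<Sum>i\<le>n. c ^ i) + c ^ Suc n" by simp
  also have "\<dots> \<le> (c + 1) ^ n + c * (c + 1) ^ n" using Suc.IH cs by (rule add_mono)
  also have "\<dots> = (c + 1) ^ Suc n" by (simp add: algebra_simps)
  finally show ?case .
qed

lemma sum_le_prod_nat: "(a::nat) \<ge> 2 \<Longrightarrow> b \<ge> 2 \<Longrightarrow> a + b \<le> a * b"
proof -
  assume a: "a \<ge> 2" and b: "b \<ge> 2"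
  have "a + b \<le> 2 * max a b" by simp
  also have "\<dots> \<le> min a b * max a b" using a b by (intro mult_right_mono) auto
  also have "\<dots> = a * b" by (cases "a \<le> b") (auto simp: min_def max_def)
  finally show ?thesis .
qed

lemma card_Tset:
  assumes "W \<ge> 1"
  shows "finite (Tset \<sigma> W :: ('d::finite) tok set) \<and>
         card (Tset \<sigma> W :: 'd tok set) \<le> card (Gs \<sigma> W) * (CARD('d) + W + 2)"
proof -
  define G where "G = Gs \<sigma> W"
  define R where "R = (range In \<union> Nd ` {..<W+1} :: 'd rf set)"
  have fG: "finite G" using grid_card[OF assms] by (simp add: G_def)
  have fR: "finite R" by (simp add: R_def)
  have cR: "card R \<le> CARD('d) + (W + 1)"
  proof -
    have "card R \<le> card (range (In :: 'd \<Rightarrow> 'd rf)) + card (Nd ` {..<W+1} :: 'd rf set)"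
      unfolding R_def by (rule card_Un_le)
    also have "card (range (In :: 'd \<Rightarrow> 'd rf)) \<le> CARD('d)" by (rule card_image_le) simp
    also have "card (Nd ` {..<W+1} :: 'd rf set) \<le> W + 1"
      using card_image_le[of "{..<W+1}" Nd] by simp
    finally show ?thesis by simp
  qed
  have T: "Tset \<sigma> W = TB ` G \<union> tg ` (G \<times> R)" by (simp add: Tset_def G_def R_def)
  have fT: "finite (Tset \<sigma> W :: 'd tok set)" unfolding T using fG fR by simp
  have "card (Tset \<sigma> W :: 'd tok set) \<le> card (TB ` G :: 'd tok set) + card (tg ` (G \<times> R))"
    unfolding T by (rule card_Un_le)
  also have "card (TB ` G :: 'd tok set) \<le> card G" by (rule card_image_le[OF fG])
  also have "card (tg ` (G \<times> R)) \<le> card (G \<times> R)" by (rule card_image_le) (simp add: fG fR)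
  also have "card (G \<times> R) = card G * card R" by (rule card_cartesian_product)
  also have "card G + card G * card R \<le> card G * (CARD('d) + W + 2)"
  proof -
    have "card G + card G * card R = card G * (card R + 1)" by (simp add: algebra_simps)
    also have "\<dots> \<le> card G * (CARD('d) + W + 2)" using cR by (intro mult_left_mono) auto
    finally show ?thesis .
  qed
  finally show ?thesis using fT by (simp add: G_def)
qed

definition Cst :: "nat \<Rightarrow> nat \<Rightarrow> nat" where
  "Cst \<sigma> D = 3 * (2 * \<sigma> + D + 5)"

lemma card_Progs:
  assumes W: "W \<ge> 1"
  shows "finite (Progs \<sigma> W :: ('d::finite) node list set) \<and>
         card (Progs \<sigma> W :: 'd node list set) \<le> 2 ^ (Cst \<sigma> CARD('d) * W * (nat \<lceil>log 2 (1 + real W)\<rceil>)\<^sup>2)"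
proof -
  define K where "K = nat \<lceil>log 2 (1 + real W)\<rceil>"
  define D where "D = CARD('d)"
  define E where "E = 2 * \<sigma> + D + 5"
  define T where "T = (Tset \<sigma> W :: 'd tok set)"
  define LS where "LS = {xs. set xs \<subseteq> T \<and> length xs \<le> 2 * W + 1}"
  have K1: "1 \<le> K" unfolding K_def by (rule K_ge1[OF W])
  have WK: "W + 1 \<le> 2 ^ K" unfolding K_def by (rule W1_le_pow[OF W])
  have fT: "finite T" and cT: "card T \<le> card (Gs \<sigma> W) * (D + W + 2)"
    using card_Tset[OF W, where 'd='d, of \<sigma>] by (simp_all add: T_def D_def)
  have cG: "card (Gs \<sigma> W) \<le> 2 ^ (2 * \<sigma> * K\<^sup>2 + 2)" using grid_card[OF W, of \<sigma>] by (simp add: K_def)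
  have fLS: "finite LS" unfolding LS_def by (rule finite_lists_length_le[OF fT])
  have sub: "flat ` (Progs \<sigma> W :: 'd node list set) \<subseteq> LS"
    using flat_in unfolding LS_def T_def by blast
  have inj: "inj_on flat (Progs \<sigma> W :: 'd node list set)"
    by (rule inj_onI) (rule flat_inj)
  have fP: "finite (Progs \<sigma> W :: 'd node list set)"
    using finite_imageD[OF finite_subset[OF sub fLS] inj] .
  have "card (Progs \<sigma> W :: 'd node list set) \<le> card LS"
    by (rule card_inj_on_le[OF inj sub fLS])
  also have "card LS = (\<Sum>i\<le>2 * W + 1. card T ^ i)"
    unfolding LS_def by (rule card_lists_length_le[OF fT])
  also have "\<dots> \<le> (card T + 1) ^ (2 * W + 1)" by (rule geom_le)
  also have "\<dots> \<le> (2 ^ (E * K\<^sup>2)) ^ (2 * W + 1)"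
  proof (rule power_mono)
    have a: "D + W + 3 \<le> 2 ^ (D + 2) * 2 ^ K"
    proof -
      have "D + 2 \<le> 2 ^ (D + 2)" using less_exp[of "D + 2"] by linarith
      moreover have "2 \<le> (2::nat) ^ (D + 2)"
        by (metis add_2_eq_Suc' le_add2 power_increasing power_one_right zero_less_numeral one_le_numeral order.trans Suc_1 le_add_same_cancel2)
      moreover have "2 \<le> (2::nat) ^ K" using K1
        by (metis power_increasing power_one_right one_le_numeral)
      ultimately show ?thesis using WK sum_le_prod_nat[of "2 ^ (D + 2)" "2 ^ K"] by linarith
    qed
    have "card T + 1 \<le> 2 ^ (2 * \<sigma> * K\<^sup>2 + 2) * (D + W + 2) + 1"
      using cT cG by (meson add_le_mono1 mult_le_mono1 order.trans)
    also have "\<dots> \<le> 2 ^ (2 * \<sigma> * K\<^sup>2 + 2) * (D + W + 2) + 2 ^ (2 * \<sigma> * K\<^sup>2 + 2)"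
      by (intro add_left_mono) simp
    also have "\<dots> = 2 ^ (2 * \<sigma> * K\<^sup>2 + 2) * (D + W + 3)" by (simp add: algebra_simps)
    also have "\<dots> \<le> 2 ^ (2 * \<sigma> * K\<^sup>2 + 2) * (2 ^ (D + 2) * 2 ^ K)"
      using a by (intro mult_left_mono) auto
    also have "\<dots> = 2 ^ ((2 * \<sigma> * K\<^sup>2 + 2) + ((D + 2) + K))" by (simp only: power_add)
    also have "\<dots> \<le> 2 ^ (E * K\<^sup>2)"
    proof (rule power_increasing)
      have "K \<le> K\<^sup>2" using K1 by (simp add: power2_eq_square)
      moreover have "D + 4 \<le> (D + 4) * K\<^sup>2" using K1 by (simp add: power2_eq_square)
      ultimately show "(2 * \<sigma> * K\<^sup>2 + 2) + ((D + 2) + K) \<le> E * K\<^sup>2" unfolding E_def by (simp add: algebra_simps)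
    qed simp
    finally show "card T + 1 \<le> 2 ^ (E * K\<^sup>2)" .
  qed simp
  also have "\<dots> = 2 ^ (E * K\<^sup>2 * (2 * W + 1))" by (rule power_mult[symmetric])
  also have "\<dots> \<le> 2 ^ (Cst \<sigma> D * W * K\<^sup>2)"
  proof (rule power_increasing)
    have "2 * W + 1 \<le> 3 * W" using W by simp
    then have "E * K\<^sup>2 * (2 * W + 1) \<le> E * K\<^sup>2 * (3 * W)" by (intro mult_left_mono) auto
    then show "E * K\<^sup>2 * (2 * W + 1) \<le> Cst \<sigma> D * W * K\<^sup>2" by (simp add: Cst_def E_def algebra_simps)
  qed simp
  finally show ?thesis using fP by (simp add: K_def D_def)
qed

lemma card_NN:
  assumes W: "W \<ge> 1"
  shows "finite (NNset \<rho> \<sigma> W :: (real^'d::finite \<Rightarrow> real) set) \<and>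
         card (NNset \<rho> \<sigma> W :: (real^'d \<Rightarrow> real) set) \<le> 2 ^ (Cst \<sigma> CARD('d) * W * (nat \<lceil>log 2 (1 + real W)\<rceil>)\<^sup>2)"
proof -
  have sub: "(NNset \<rho> \<sigma> W :: (real^'d \<Rightarrow> real) set) \<subseteq> (\<lambda>P x. ev \<rho> (\<lambda>j. x $ j) P) ` (Progs \<sigma> W :: 'd node list set)"
  proof
    fix g assume "g \<in> (NNset \<rho> \<sigma> W :: (real^'d \<Rightarrow> real) set)"
    then obtain \<Phi> :: "'d network" where "g = realize \<rho> \<Phi>" "nn_valid \<Phi>" "d_out \<Phi> = 1" "quantized \<sigma> W \<Phi>" "nweights \<Phi> \<le> W"
      unfolding NNset_def by blast
    then show "g \<in> (\<lambda>P x. ev \<rho> (\<lambda>j. x $ j) P) ` (Progs \<sigma> W :: 'd node list set)"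
      using net_prog[of \<Phi> \<sigma> W \<rho>] by blast
  qed
  have cp: "finite (Progs \<sigma> W :: 'd node list set)" "card (Progs \<sigma> W :: 'd node list set) \<le> 2 ^ (Cst \<sigma> CARD('d) * W * (nat \<lceil>log 2 (1 + real W)\<rceil>)\<^sup>2)"
    using card_Progs[OF W, where 'd='d, of \<sigma>] by auto
  have f: "finite (NNset \<rho> \<sigma> W :: (real^'d \<Rightarrow> real) set)"
    by (rule finite_subset[OF sub]) (use cp in simp)
  have "card (NNset \<rho> \<sigma> W :: (real^'d \<Rightarrow> real) set) \<le> card ((\<lambda>P x. ev \<rho> (\<lambda>j. x $ j) P) ` (Progs \<sigma> W :: 'd node list set))"
    by (rule card_mono[OF _ sub]) (use cp in simp)
  also have "\<dots> \<le> card (Progs \<sigma> W :: 'd node list set)" by (rule card_image_le[OF cp(1)])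
  finally show ?thesis using f cp(2) by linarith
qed




lemma rt_meas:
  assumes rho: "\<rho> \<in> borel_measurable borel"
  shows "(\<forall>j. (\<lambda>x. z x j) \<in> borel_measurable M) \<Longrightarrow> (\<lambda>x. rt \<rho> n (z x) ms Ls i) \<in> borel_measurable M"
proof (induction Ls arbitrary: n z ms i)
  case Nil
  then show ?case by (cases ms) auto
next
  case (Cons Ab Ls)
  obtain A b where Ab: "Ab = (A, b)" by (cases Ab)
  show ?case
  proof (cases ms)
    case Nil
    then show ?thesis using Cons.prems by simp
  next
    case (Cons m ms')
    define z' where "z' x = (\<lambda>i. (\<Sum>j<n. A i j * \<rho> (z x j)) + b i)" for x
    have "\<forall>i. (\<lambda>x. z' x i) \<in> borel_measurable M"
    proof
      fix i
      have "(\<lambda>x. \<rho> (z x j)) \<in> borel_measurable M" for j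
        using measurable_compose[OF spec[OF Cons.prems[unfolded \<open>ms = m # ms'\<close>], of j] rho]
        by (metis Cons.prems measurable_compose rho)
      then show "(\<lambda>x. z' x i) \<in> borel_measurable M" unfolding z'_def by measurable
    qed
    then have "(\<lambda>x. rt \<rho> m (z' x) ms' Ls i) \<in> borel_measurable M" by (rule Cons.IH)
    then show ?thesis by (simp add: Ab Cons z'_def)
  qed
qed

lemma realize_meas:
  assumes rho: "\<rho> \<in> borel_measurable borel"
  shows "realize \<rho> (\<Phi> :: ('d::finite) network) \<in> borel_measurable lborel"
proof -
  obtain Ns A1 b1 Ls where Phi: "\<Phi> = (Ns, (A1, b1), Ls)" by (cases \<Phi>) auto
  define z1 where "z1 x = (\<lambda>i. (\<Sum>j\<in>UNIV. A1 i j * x $ j) + b1 i)" for x :: "real^'d"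
  have vn: "(\<lambda>x::real^'d. x $ j) \<in> borel_measurable borel" for j
    by (rule borel_measurable_continuous_onI) (intro continuous_intros)
  have "\<forall>i. (\<lambda>x. z1 x i) \<in> borel_measurable borel"
    unfolding z1_def using vn by measurable
  then have "(\<lambda>x. rt \<rho> (hd Ns) (z1 x) (tl Ns) Ls 0) \<in> borel_measurable borel"
    by (rule rt_meas[OF rho])
  moreover have "realize \<rho> \<Phi> = (\<lambda>x. rt \<rho> (hd Ns) (z1 x) (tl Ns) Ls 0)"
    by (auto simp: realize_def Phi z1_def)
  ultimately show ?thesis by simp
qed

lemma NN_meas:
  assumes rho: "\<rho> \<in> borel_measurable borel"
  shows "g \<in> (NNset \<rho> \<sigma> W :: (real^'d::finite \<Rightarrow> real) set) \<Longrightarrow> g \<in> borel_measurable lborel"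
  unfolding NNset_def using realize_meas[OF rho] by auto

lemma ball_L2:
  assumes g: "g \<in> borel_measurable lborel" and Om: "\<Omega> \<in> sets lborel" and f: "f \<in> l2ball \<Omega> g \<epsilon>"
  shows "g \<in> L2set \<Omega>"
proof -
  have fm: "f \<in> borel_measurable lborel" and fi: "(\<integral>\<^sup>+ x\<in>\<Omega>. ennreal ((f x)\<^sup>2) \<partial>lborel) < \<infinity>"
    and di: "(\<integral>\<^sup>+ x\<in>\<Omega>. ennreal ((f x - g x)\<^sup>2) \<partial>lborel) \<le> ennreal (\<epsilon>\<^sup>2)"
    using f by (auto simp: l2ball_def L2set_def)
  have pw: "ennreal ((g x)\<^sup>2) * indicator \<Omega> x \<le>
      2 * (ennreal ((f x)\<^sup>2) * indicator \<Omega> x) + 2 * (ennreal ((f x - g x)\<^sup>2) * indicator \<Omega> x)" for x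
  proof -
    have e: "2 * (f x)\<^sup>2 + 2 * (f x - g x)\<^sup>2 - (g x)\<^sup>2 = (2 * f x - g x)\<^sup>2"
      by (simp add: power2_eq_square algebra_simps)
    have "(g x)\<^sup>2 \<le> 2 * (f x)\<^sup>2 + 2 * (f x - g x)\<^sup>2"
      using e zero_le_power2[of "2 * f x - g x"] by linarith
    then have "ennreal ((g x)\<^sup>2) \<le> ennreal (2 * (f x)\<^sup>2 + 2 * (f x - g x)\<^sup>2)" by (rule ennreal_leI)
    also have "\<dots> = 2 * ennreal ((f x)\<^sup>2) + 2 * ennreal ((f x - g x)\<^sup>2)"
    proof -
      have a: "ennreal (2 * (f x)\<^sup>2) = 2 * ennreal ((f x)\<^sup>2)"
        using ennreal_mult[of 2 "(f x)\<^sup>2"] by simp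
      have b: "ennreal (2 * (f x - g x)\<^sup>2) = 2 * ennreal ((f x - g x)\<^sup>2)"
        using ennreal_mult[of 2 "(f x - g x)\<^sup>2"] by simp
      have "ennreal (2 * (f x)\<^sup>2 + 2 * (f x - g x)\<^sup>2) = ennreal (2 * (f x)\<^sup>2) + ennreal (2 * (f x - g x)\<^sup>2)"
        by (rule ennreal_plus) auto
      then show ?thesis using a b by simp
    qed
    finally show ?thesis by (cases "x \<in> \<Omega>") auto
  qed
  have "(\<integral>\<^sup>+ x\<in>\<Omega>. ennreal ((g x)\<^sup>2) \<partial>lborel) \<le>
      (\<integral>\<^sup>+ x. 2 * (ennreal ((f x)\<^sup>2) * indicator \<Omega> x) + 2 * (ennreal ((f x - g x)\<^sup>2) * indicator \<Omega> x) \<partial>lborel)"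
    by (rule nn_integral_mono) (use pw in auto)
  also have "\<dots> = 2 * (\<integral>\<^sup>+ x\<in>\<Omega>. ennreal ((f x)\<^sup>2) \<partial>lborel) + 2 * (\<integral>\<^sup>+ x\<in>\<Omega>. ennreal ((f x - g x)\<^sup>2) \<partial>lborel)"
    using fm g Om by (subst nn_integral_add) (auto simp: nn_integral_cmult)
  also have "\<dots> < \<infinity>"
  proof -
    have "(\<integral>\<^sup>+ x\<in>\<Omega>. ennreal ((f x - g x)\<^sup>2) \<partial>lborel) < \<infinity>"
      using di by (rule le_less_trans) simp
    then show ?thesis using fi by (simp add: ennreal_mult_less_top)
  qed
  finally show ?thesis using g by (simp add: L2set_def)
qed




lemma pow_to_powr:
  assumes "W \<ge> (1::nat)"
  shows "real ((2::nat) ^ (Cst \<sigma> D * W * (nat \<lceil>log 2 (1 + real W)\<rceil>)\<^sup>2)) =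
         2 powr (real (Cst \<sigma> D) * real W * (real_of_int \<lceil>log 2 (1 + real W)\<rceil>)\<^sup>2)"
proof -
  have l: "1 \<le> log 2 (1 + real W)" using assms by simp
  have nn: "0 \<le> \<lceil>log 2 (1 + real W)\<rceil>" using l zero_le_ceiling[of "log 2 (1 + real W)"] by linarith
  define N where "N = Cst \<sigma> D * W * (nat \<lceil>log 2 (1 + real W)\<rceil>)\<^sup>2"
  have "real ((2::nat) ^ N) = 2 powr real N"
    by (simp add: powr_realpow)
  also have "real N = real (Cst \<sigma> D) * real W * (real_of_int \<lceil>log 2 (1 + real W)\<rceil>)\<^sup>2"
    using nn by (simp add: N_def)
  finally show ?thesis by (simp only: N_def)
qed

lemma part1_core:
  fixes \<Omega> :: "(real^'d::finite) set"
  assumes crit: "critical_setting \<Omega> S P s_star" and rho: "\<rho> \<in> borel_measurable borel" and s: "s > s_star"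
  shows "\<exists>c>0. \<exists>\<epsilon>0>0. \<forall>W \<epsilon>. W \<ge> 1 \<and> 0 < \<epsilon> \<and> \<epsilon> < \<epsilon>0 \<longrightarrow>
     (\<exists>B\<in>sets P. {f\<in>S. \<exists>g\<in>NNset \<rho> \<sigma> W. f \<in> l2ball \<Omega> g \<epsilon>} \<subseteq> B \<and>
        measure P B \<le> 2 powr (real (Cst \<sigma> CARD('d)) * real W * (real_of_int \<lceil>log 2 (1 + real W)\<rceil>)\<^sup>2 - c * \<epsilon> powr (-1 / s)))"
    (is "\<exists>c>0. \<exists>\<epsilon>0>0. ?Q c \<epsilon>0")
proof -
  have Om: "\<Omega> \<in> sets lborel" using crit by (simp add: critical_setting_def borel_open)
  have setsP: "sets P = sigma_sets S {S \<inter> l2ball \<Omega> g \<epsilon> | g \<epsilon>. g \<in> L2set \<Omega> \<and> \<epsilon> > 0}"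
    using crit by (simp add: critical_setting_def)
  obtain c \<epsilon>0 where c: "c > 0" "\<epsilon>0 > 0" and bd: "\<forall>g\<in>L2set \<Omega>. \<forall>\<epsilon>. 0 < \<epsilon> \<and> \<epsilon> < \<epsilon>0 \<longrightarrow>
        measure P (S \<inter> l2ball \<Omega> g \<epsilon>) \<le> 2 powr (- c * \<epsilon> powr (-1 / s))"
    using crit s unfolding critical_setting_def by blast
  have "?Q c \<epsilon>0"
  proof (intro allI impI)
    fix W :: nat and \<epsilon> :: real assume a: "W \<ge> 1 \<and> 0 < \<epsilon> \<and> \<epsilon> < \<epsilon>0"
    define NN where "NN = (NNset \<rho> \<sigma> W :: (real^'d \<Rightarrow> real) set)"
    define G where "G = NN \<inter> L2set \<Omega>"
    define B where "B = (\<Union>g\<in>G. S \<inter> l2ball \<Omega> g \<epsilon>)"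
    have cNN: "finite NN" "card NN \<le> 2 ^ (Cst \<sigma> CARD('d) * W * (nat \<lceil>log 2 (1 + real W)\<rceil>)\<^sup>2)"
      using card_NN[of W \<rho> \<sigma>, where 'd='d] a by (auto simp: NN_def)
    have fG: "finite G" using cNN(1) by (simp add: G_def)
    have cG: "card G \<le> card NN" unfolding G_def by (rule card_mono[OF cNN(1)]) auto
    have mem: "S \<inter> l2ball \<Omega> g \<epsilon> \<in> sets P" if "g \<in> G" for g
    proof -
      have "S \<inter> l2ball \<Omega> g \<epsilon> \<in> {S \<inter> l2ball \<Omega> g \<epsilon> | g \<epsilon>. g \<in> L2set \<Omega> \<and> \<epsilon> > 0}"
        using that a by (auto simp: G_def)
      then show ?thesis unfolding setsP by (rule sigma_sets.Basic)
    qed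
    have BP: "B \<in> sets P" unfolding B_def using fG mem by blast
    have sub: "{f\<in>S. \<exists>g\<in>NNset \<rho> \<sigma> W. f \<in> l2ball \<Omega> g \<epsilon>} \<subseteq> B"
    proof
      fix f assume "f \<in> {f\<in>S. \<exists>g\<in>NNset \<rho> \<sigma> W. f \<in> l2ball \<Omega> g \<epsilon>}"
      then obtain g where f: "f \<in> S" "g \<in> NN" "f \<in> l2ball \<Omega> g \<epsilon>" by (auto simp: NN_def)
      have "g \<in> L2set \<Omega>" using ball_L2[OF NN_meas[OF rho f(2)[unfolded NN_def]] Om f(3)] .
      then show "f \<in> B" using f by (auto simp: B_def G_def)
    qed
    have "measure P B \<le> (\<Sum>g\<in>G. measure P (S \<inter> l2ball \<Omega> g \<epsilon>))"
      unfolding B_def by (rule measure_UNION_le[OF fG mem])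
    also have "\<dots> \<le> (\<Sum>g\<in>G. 2 powr (- c * \<epsilon> powr (-1 / s)))"
      by (rule sum_mono) (use bd a in \<open>auto simp: G_def\<close>)
    also have "\<dots> = real (card G) * 2 powr (- c * \<epsilon> powr (-1 / s))" by simp
    also have "\<dots> \<le> real ((2::nat) ^ (Cst \<sigma> CARD('d) * W * (nat \<lceil>log 2 (1 + real W)\<rceil>)\<^sup>2)) * 2 powr (- c * \<epsilon> powr (-1 / s))"
      using cG cNN(2) by (intro mult_right_mono) auto
    also have "\<dots> = 2 powr (real (Cst \<sigma> CARD('d)) * real W * (real_of_int \<lceil>log 2 (1 + real W)\<rceil>)\<^sup>2 - c * \<epsilon> powr (-1 / s))"
    proof -
      have W1: "W \<ge> 1" using a by simp
      show ?thesis unfolding pow_to_powr[OF W1] by (simp add: powr_add[symmetric])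
    qed
    finally show "\<exists>B\<in>sets P. {f\<in>S. \<exists>g\<in>NNset \<rho> \<sigma> W. f \<in> l2ball \<Omega> g \<epsilon>} \<subseteq> B \<and>
        measure P B \<le> 2 powr (real (Cst \<sigma> CARD('d)) * real W * (real_of_int \<lceil>log 2 (1 + real W)\<rceil>)\<^sup>2 - c * \<epsilon> powr (-1 / s))"
      using BP sub by blast
  qed
  then show ?thesis using c by blast
qed

lemma outer_le:
  assumes "B \<in> sets P" "A \<subseteq> B"
  shows "outer_prob P A \<le> measure P B"
  unfolding outer_prob_def
  by (rule cInf_lower) (use assms in \<open>auto intro: bdd_belowI[of _ 0]\<close>)




lemma lim_h:
  fixes n C c q s :: real
  assumes "n > 0" "C \<ge> 0" "c > 0" "q > 0" "s > 0" "q < 1 / s"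
  shows "((\<lambda>e. n * e powr (-q) * 2 powr (C * (n * e powr (-q)) * (log 2 (1 + n * e powr (-q)) + 1)\<^sup>2 - c * e powr (-1/s))) \<longlongrightarrow> 0) (at_right 0)"
  using assms by real_asymp

lemma ceil_log_le:
  assumes "1 \<le> W" "real W \<le> X"
  shows "(real_of_int \<lceil>log 2 (1 + real W)\<rceil>)\<^sup>2 \<le> (log 2 (1 + X) + 1)\<^sup>2"
proof -
  have l0: "0 \<le> log 2 (1 + real W)" using assms by simp
  have "log 2 (1 + real W) \<le> log 2 (1 + X)" using assms by simp
  then have "real_of_int \<lceil>log 2 (1 + real W)\<rceil> \<le> log 2 (1 + X) + 1" by linarith
  moreover have "0 \<le> real_of_int \<lceil>log 2 (1 + real W)\<rceil>" using l0 by linarith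
  ultimately show ?thesis by (rule power_mono)
qed

lemma part2_piece:
  fixes \<Omega> :: "(real^'d::finite) set"
  assumes crit: "critical_setting \<Omega> S P s_star" and rho: "\<rho> \<in> borel_measurable borel"
    and q: "0 < q" "q < 1 / s_star" and n: "n > 0"
  shows "\<exists>N\<in>null_sets P. {f\<in>S. \<forall>\<epsilon>. 0 < \<epsilon> \<and> \<epsilon> < 1 \<longrightarrow> (\<exists>W. 1 \<le> W \<and> real W \<le> n * \<epsilon> powr (-q) \<and>
      (\<exists>g\<in>NNset \<rho> \<sigma> W. f \<in> l2ball \<Omega> g \<epsilon>))} \<subseteq> N"
proof -
  define A where "A = {f\<in>S. \<forall>\<epsilon>. 0 < \<epsilon> \<and> \<epsilon> < 1 \<longrightarrow> (\<exists>W. 1 \<le> W \<and> real W \<le> n * \<epsilon> powr (-q) \<and>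
      (\<exists>g\<in>NNset \<rho> \<sigma> W. f \<in> l2ball \<Omega> g \<epsilon>))}"
  have ss: "s_star > 0" and ps: "prob_space P" using crit by (auto simp: critical_setting_def)
  interpret prob_space P by (rule ps)
  define s where "s = (s_star + 1 / q) / 2"
  have sq: "s_star < 1 / q" using q ss by (simp add: field_simps)
  have s1: "s > s_star" "s < 1 / q" using sq by (auto simp: s_def)
  have s0: "s > 0" using s1 ss by linarith
  have qs: "q < 1 / s" using s1(2) s0 q(1) by (simp add: field_simps)
  define C where "C = real (Cst \<sigma> CARD('d))"
  obtain c \<epsilon>0 where c: "c > 0" "\<epsilon>0 > 0" and core: "\<forall>W \<epsilon>. W \<ge> 1 \<and> 0 < \<epsilon> \<and> \<epsilon> < \<epsilon>0 \<longrightarrow>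
     (\<exists>B\<in>sets P. {f\<in>S. \<exists>g\<in>NNset \<rho> \<sigma> W. f \<in> l2ball \<Omega> g \<epsilon>} \<subseteq> B \<and>
        measure P B \<le> 2 powr (C * real W * (real_of_int \<lceil>log 2 (1 + real W)\<rceil>)\<^sup>2 - c * \<epsilon> powr (-1 / s)))"
    using part1_core[OF crit rho s1(1), of \<sigma>] unfolding C_def by blast
  define Q where "Q p B = (B \<in> sets P \<and>
      {f\<in>S. \<exists>g\<in>NNset \<rho> \<sigma> (fst p). f \<in> l2ball \<Omega> g (snd p)} \<subseteq> B \<and>
      measure P B \<le> 2 powr (C * real (fst p) * (real_of_int \<lceil>log 2 (1 + real (fst p))\<rceil>)\<^sup>2 - c * (snd p) powr (-1 / s)))"
    for p :: "nat \<times> real" and B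
  have "\<forall>p. \<exists>B. (fst p \<ge> 1 \<and> 0 < snd p \<and> snd p < \<epsilon>0) \<longrightarrow> Q p B"
  proof
    fix p :: "nat \<times> real"
    show "\<exists>B. (fst p \<ge> 1 \<and> 0 < snd p \<and> snd p < \<epsilon>0) \<longrightarrow> Q p B"
    proof (cases "fst p \<ge> 1 \<and> 0 < snd p \<and> snd p < \<epsilon>0")
      case True
      then obtain B where "B \<in> sets P \<and> {f\<in>S. \<exists>g\<in>NNset \<rho> \<sigma> (fst p). f \<in> l2ball \<Omega> g (snd p)} \<subseteq> B \<and>
        measure P B \<le> 2 powr (C * real (fst p) * (real_of_int \<lceil>log 2 (1 + real (fst p))\<rceil>)\<^sup>2 - c * (snd p) powr (-1 / s))"
        using core[rule_format, of "fst p" "snd p"] by blast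
      then show ?thesis unfolding Q_def by blast
    qed blast
  qed
  then have "\<exists>Bf. \<forall>p. (fst p \<ge> 1 \<and> 0 < snd p \<and> snd p < \<epsilon>0) \<longrightarrow> Q p (Bf p)" by (rule choice)
  then obtain Bf where Bf0: "\<forall>p. (fst p \<ge> 1 \<and> 0 < snd p \<and> snd p < \<epsilon>0) \<longrightarrow> Q p (Bf p)" by blast
  have Bf: "Bf (W, \<epsilon>) \<in> sets P \<and>
      {f\<in>S. \<exists>g\<in>NNset \<rho> \<sigma> W. f \<in> l2ball \<Omega> g \<epsilon>} \<subseteq> Bf (W, \<epsilon>) \<and>
      measure P (Bf (W, \<epsilon>)) \<le> 2 powr (C * real W * (real_of_int \<lceil>log 2 (1 + real W)\<rceil>)\<^sup>2 - c * \<epsilon> powr (-1 / s))"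
    if "W \<ge> 1" "0 < \<epsilon>" "\<epsilon> < \<epsilon>0" for W \<epsilon>
    using Bf0[rule_format, of "(W, \<epsilon>)"] that unfolding Q_def by simp
  define h where "h e = n * e powr (-q) * 2 powr (C * (n * e powr (-q)) * (log 2 (1 + n * e powr (-q)) + 1)\<^sup>2 - c * e powr (-1/s))" for e
  define U where "U e = (\<Union>W\<in>{1..nat \<lfloor>n * e powr (-q)\<rfloor>}. Bf (W, e))" for e
  have U: "U e \<in> sets P \<and> A \<subseteq> U e \<and> measure P (U e) \<le> h e" if e: "0 < e" "e < \<epsilon>0" "e < 1" for e
  proof -
    define X where "X = n * e powr (-q)"
    have X0: "X > 0" using n e by (simp add: X_def)
    have UP: "U e \<in> sets P" unfolding U_def using Bf e by auto
    have AU: "A \<subseteq> U e"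
    proof
      fix f assume "f \<in> A"
      then obtain W g where W: "1 \<le> W" "real W \<le> X" "g \<in> NNset \<rho> \<sigma> W" "f \<in> l2ball \<Omega> g e" "f \<in> S"
        using e unfolding A_def X_def by blast
      have "W \<le> nat \<lfloor>X\<rfloor>" using W(2) by linarith
      then have "W \<in> {1..nat \<lfloor>X\<rfloor>}" using W(1) by simp
      moreover have "f \<in> Bf (W, e)" using Bf[OF W(1) e(1,2)] W(3-5) by blast
      ultimately show "f \<in> U e" unfolding U_def X_def by blast
    qed
    have "measure P (U e) \<le> (\<Sum>W\<in>{1..nat \<lfloor>X\<rfloor>}. measure P (Bf (W, e)))"
      unfolding U_def X_def by (rule measure_UNION_le) (use Bf e in auto)
    also have "\<dots> \<le> (\<Sum>W\<in>{1..nat \<lfloor>X\<rfloor>}. 2 powr (C * X * (log 2 (1 + X) + 1)\<^sup>2 - c * e powr (-1/s)))"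
    proof (rule sum_mono)
      fix W assume "W \<in> {1..nat \<lfloor>X\<rfloor>}"
      then have W: "1 \<le> W" "real W \<le> X" by auto linarith
      have "C * real W * (real_of_int \<lceil>log 2 (1 + real W)\<rceil>)\<^sup>2 \<le> C * X * (log 2 (1 + X) + 1)\<^sup>2"
      proof (rule mult_mono)
        show "C * real W \<le> C * X" using W(2) by (intro mult_left_mono) (auto simp: C_def)
        show "(real_of_int \<lceil>log 2 (1 + real W)\<rceil>)\<^sup>2 \<le> (log 2 (1 + X) + 1)\<^sup>2" by (rule ceil_log_le[OF W])
        show "0 \<le> C * X" using X0 by (simp add: C_def)
      qed simp
      then have "2 powr (C * real W * (real_of_int \<lceil>log 2 (1 + real W)\<rceil>)\<^sup>2 - c * e powr (-1/s))
          \<le> 2 powr (C * X * (log 2 (1 + X) + 1)\<^sup>2 - c * e powr (-1/s))"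
        by (intro powr_mono) auto
      then show "measure P (Bf (W, e)) \<le> 2 powr (C * X * (log 2 (1 + X) + 1)\<^sup>2 - c * e powr (-1/s))"
        using Bf[OF W(1) e(1,2)] by linarith
    qed
    also have "\<dots> = real (nat \<lfloor>X\<rfloor>) * 2 powr (C * X * (log 2 (1 + X) + 1)\<^sup>2 - c * e powr (-1/s))" by simp
    also have "\<dots> \<le> X * 2 powr (C * X * (log 2 (1 + X) + 1)\<^sup>2 - c * e powr (-1/s))"
    proof (rule mult_right_mono)
      have f0: "0 \<le> \<lfloor>X\<rfloor>" using X0 by simp
      then have "real (nat \<lfloor>X\<rfloor>) = real_of_int \<lfloor>X\<rfloor>" by simp
      then show "real (nat \<lfloor>X\<rfloor>) \<le> X" using of_int_floor_le[of X] by linarith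
    qed simp
    also have "\<dots> = h e" by (simp add: h_def X_def)
    finally show ?thesis using UP AU by blast
  qed
  have lim: "(h \<longlongrightarrow> 0) (at_right 0)" unfolding h_def
    by (rule lim_h[OF n _ c(1) q(1) s0 qs]) (simp add: C_def)
  have "\<forall>k::nat. \<exists>e. 0 < e \<and> e < \<epsilon>0 \<and> e < 1 \<and> h e < 1 / (real k + 1)"
  proof
    fix k :: nat
    have ev1: "eventually (\<lambda>e. h e < 1 / (real k + 1)) (at_right 0)"
      by (rule order_tendstoD(2)[OF lim]) simp
    have ev2: "eventually (\<lambda>e. e < min \<epsilon>0 1) (at_right (0::real))"
      by (rule order_tendstoD(2)[OF tendsto_ident_at]) (simp add: c)
    have ev3: "eventually (\<lambda>e. 0 < e) (at_right (0::real))" by (rule eventually_at_right_less)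
    have "eventually (\<lambda>e. 0 < e \<and> e < \<epsilon>0 \<and> e < 1 \<and> h e < 1 / (real k + 1)) (at_right (0::real))"
      using ev1 ev2 ev3 by eventually_elim auto
    then show "\<exists>e. 0 < e \<and> e < \<epsilon>0 \<and> e < 1 \<and> h e < 1 / (real k + 1)"
      by (rule eventually_happens'[rotated]) simp
  qed
  then obtain ef where ef: "\<And>k. 0 < ef k \<and> ef k < \<epsilon>0 \<and> ef k < 1 \<and> h (ef k) < 1 / (real k + 1)"
    by metis
  define N where "N = (\<Inter>k. U (ef k))"
  have NP: "N \<in> sets P" unfolding N_def using U ef by auto
  have AN: "A \<subseteq> N" unfolding N_def using U ef by blast
  have mN: "measure P N \<le> 1 / (real k + 1)" for k
  proof -
    have "measure P N \<le> measure P (U (ef k))"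
      by (rule finite_measure_mono) (use U ef in \<open>auto simp: N_def\<close>)
    also have "\<dots> \<le> h (ef k)" using U ef by blast
    finally show ?thesis using ef[of k] by linarith
  qed
  have "measure P N \<le> 0"
  proof (rule ccontr)
    assume "\<not> measure P N \<le> 0"
    then have pos: "measure P N > 0" by simp
    obtain k :: nat where "1 / measure P N < real k" using reals_Archimedean2 by blast
    then have "1 < real k * measure P N" using pos by (simp add: field_simps)
    moreover have "(real k + 1) * measure P N \<le> 1" using mN[of k] by (simp add: field_simps)
    ultimately show False using pos by (simp add: algebra_simps)
  qed
  then have "measure P N = 0" using measure_nonneg[of P N] by linarith
  then have "N \<in> null_sets P" using NP by (simp add: emeasure_eq_measure null_setsI)
  then show ?thesis using AN unfolding A_def by blast
qed




lemma outer_nonneg: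
  assumes "A \<subseteq> space P"
  shows "0 \<le> outer_prob P A"
  unfolding outer_prob_def
proof (rule cInf_greatest)
  show "{measure P B |B. B \<in> sets P \<and> A \<subseteq> B} \<noteq> {}" using assms by blast
qed auto

lemma Weps_attained:
  assumes "Weps \<rho> \<sigma> \<Omega> \<epsilon> f \<noteq> \<infinity>"
  shows "\<exists>W. W \<ge> 1 \<and> (\<exists>g\<in>NNset \<rho> \<sigma> W. f \<in> l2ball \<Omega> g \<epsilon>) \<and> the_enat (Weps \<rho> \<sigma> \<Omega> \<epsilon> f) = W"
proof -
  define X where "X = {W. W \<ge> 1 \<and> (\<exists>g\<in>NNset \<rho> \<sigma> W. f \<in> l2ball \<Omega> g \<epsilon>)}"
  have We: "Weps \<rho> \<sigma> \<Omega> \<epsilon> f = (INF W\<in>X. enat W)" by (simp add: Weps_def X_def)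
  have "X \<noteq> {}"
  proof
    assume "X = {}"
    then have "Weps \<rho> \<sigma> \<Omega> \<epsilon> f = top" using We by simp
    then show False using assms by (simp add: top_enat_def)
  qed
  then obtain W1 where "W1 \<in> X" by blast
  define W0 where "W0 = (LEAST W. W \<in> X)"
  have W0X: "W0 \<in> X" unfolding W0_def by (rule LeastI) (rule \<open>W1 \<in> X\<close>)
  have "(INF W\<in>X. enat W) = enat W0"
  proof (rule antisym)
    show "(INF W\<in>X. enat W) \<le> enat W0" by (rule INF_lower[OF W0X])
    show "enat W0 \<le> (INF W\<in>X. enat W)"
      by (rule INF_greatest) (simp add: W0_def Least_le)
  qed
  then show ?thesis using W0X We unfolding X_def by auto
qed

theorem theorem1p7:
  fixes \<sigma> :: nat
  assumes "\<sigma> \<ge> 1"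
  shows "(\<exists>C::nat. \<forall>(\<rho>::real \<Rightarrow> real) (\<Omega>::(real^'d::finite) set) S P s_star.
            \<rho> \<in> borel_measurable borel \<and> \<rho> 0 = 0 \<and> critical_setting \<Omega> S P s_star \<longrightarrow>
            (\<forall>s>s_star. \<exists>c>0. \<exists>\<epsilon>0>0. \<forall>W::nat. \<forall>\<epsilon>. W \<ge> 1 \<and> 0 < \<epsilon> \<and> \<epsilon> < \<epsilon>0 \<longrightarrow>
               outer_prob P {f \<in> S. \<exists>g\<in>NNset \<rho> \<sigma> W. f \<in> l2ball \<Omega> g \<epsilon>}
                 \<le> 2 powr (real C * real W * (real_of_int \<lceil>log 2 (1 + real W)\<rceil>)\<^sup>2 - c * \<epsilon> powr (-1 / s)))) \<and>
         (\<forall>(\<rho>::real \<Rightarrow> real) (\<Omega>::(real^'d::finite) set) S P s_star.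
            \<rho> \<in> borel_measurable borel \<and> \<rho> 0 = 0 \<and> critical_setting \<Omega> S P s_star \<longrightarrow>
            outer_prob P (Astar \<rho> \<Omega> S s_star) = 0)"
proof (intro conjI)
  show "\<exists>C::nat. \<forall>(\<rho>::real \<Rightarrow> real) (\<Omega>::(real^'d::finite) set) S P s_star.
            \<rho> \<in> borel_measurable borel \<and> \<rho> 0 = 0 \<and> critical_setting \<Omega> S P s_star \<longrightarrow>
            (\<forall>s>s_star. \<exists>c>0. \<exists>\<epsilon>0>0. \<forall>W::nat. \<forall>\<epsilon>. W \<ge> 1 \<and> 0 < \<epsilon> \<and> \<epsilon> < \<epsilon>0 \<longrightarrow>
               outer_prob P {f \<in> S. \<exists>g\<in>NNset \<rho> \<sigma> W. f \<in> l2ball \<Omega> g \<epsilon>}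
                 \<le> 2 powr (real C * real W * (real_of_int \<lceil>log 2 (1 + real W)\<rceil>)\<^sup>2 - c * \<epsilon> powr (-1 / s)))"
  proof (rule exI[of _ "Cst \<sigma> CARD('d)"], intro allI impI)
    fix \<rho> :: "real \<Rightarrow> real" and \<Omega> :: "(real^'d) set" and S P s_star s
    assume a: "\<rho> \<in> borel_measurable borel \<and> \<rho> 0 = 0 \<and> critical_setting \<Omega> S P s_star" and s: "s > s_star"
    obtain c \<epsilon>0 where c: "c > 0" "\<epsilon>0 > 0" and core: "\<forall>W \<epsilon>. W \<ge> 1 \<and> 0 < \<epsilon> \<and> \<epsilon> < \<epsilon>0 \<longrightarrow>
     (\<exists>B\<in>sets P. {f\<in>S. \<exists>g\<in>NNset \<rho> \<sigma> W. f \<in> l2ball \<Omega> g \<epsilon>} \<subseteq> B \<and>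
        measure P B \<le> 2 powr (real (Cst \<sigma> CARD('d)) * real W * (real_of_int \<lceil>log 2 (1 + real W)\<rceil>)\<^sup>2 - c * \<epsilon> powr (-1 / s)))"
    proof -
      have cr: "critical_setting \<Omega> S P s_star" and rh: "\<rho> \<in> borel_measurable borel" using a by auto
      show ?thesis using part1_core[OF cr rh s, of \<sigma>] that by (elim exE conjE) blast
    qed
    show "\<exists>c>0. \<exists>\<epsilon>0>0. \<forall>W::nat. \<forall>\<epsilon>. W \<ge> 1 \<and> 0 < \<epsilon> \<and> \<epsilon> < \<epsilon>0 \<longrightarrow>
               outer_prob P {f \<in> S. \<exists>g\<in>NNset \<rho> \<sigma> W. f \<in> l2ball \<Omega> g \<epsilon>}
                 \<le> 2 powr (real (Cst \<sigma> CARD('d)) * real W * (real_of_int \<lceil>log 2 (1 + real W)\<rceil>)\<^sup>2 - c * \<epsilon> powr (-1 / s))"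
    proof (rule exI[of _ c], rule conjI[OF c(1)], rule exI[of _ \<epsilon>0], rule conjI[OF c(2)], intro allI impI)
      fix W :: nat and \<epsilon> :: real assume w: "W \<ge> 1 \<and> 0 < \<epsilon> \<and> \<epsilon> < \<epsilon>0"
      obtain B where B: "B \<in> sets P" "{f\<in>S. \<exists>g\<in>NNset \<rho> \<sigma> W. f \<in> l2ball \<Omega> g \<epsilon>} \<subseteq> B"
        "measure P B \<le> 2 powr (real (Cst \<sigma> CARD('d)) * real W * (real_of_int \<lceil>log 2 (1 + real W)\<rceil>)\<^sup>2 - c * \<epsilon> powr (-1 / s))"
      proof -
        from core[rule_format, of W \<epsilon>] w show ?thesis using that by (elim bexE conjE) blast
      qed
      show "outer_prob P {f \<in> S. \<exists>g\<in>NNset \<rho> \<sigma> W. f \<in> l2ball \<Omega> g \<epsilon>}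
                 \<le> 2 powr (real (Cst \<sigma> CARD('d)) * real W * (real_of_int \<lceil>log 2 (1 + real W)\<rceil>)\<^sup>2 - c * \<epsilon> powr (-1 / s))"
        using outer_le[OF B(1,2)] B(3) by linarith
    qed
  qed
  show "\<forall>(\<rho>::real \<Rightarrow> real) (\<Omega>::(real^'d::finite) set) S P s_star.
            \<rho> \<in> borel_measurable borel \<and> \<rho> 0 = 0 \<and> critical_setting \<Omega> S P s_star \<longrightarrow>
            outer_prob P (Astar \<rho> \<Omega> S s_star) = 0"
  proof (intro allI impI)
    fix \<rho> :: "real \<Rightarrow> real" and \<Omega> :: "(real^'d) set" and S P s_star
    assume a: "\<rho> \<in> borel_measurable borel \<and> \<rho> 0 = 0 \<and> critical_setting \<Omega> S P s_star"
    then have rho: "\<rho> \<in> borel_measurable borel" and crit: "critical_setting \<Omega> S P s_star" by auto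
    have spP: "space P = S" and ss: "s_star > 0" using crit by (auto simp: critical_setting_def)
    define I where "I = {i :: nat \<times> rat \<times> nat. 0 < real_of_rat (fst (snd i)) \<and> real_of_rat (fst (snd i)) < 1 / s_star \<and> 0 < snd (snd i)}"
    define Ai where "Ai i = {f\<in>S. \<forall>\<epsilon>. 0 < \<epsilon> \<and> \<epsilon> < 1 \<longrightarrow> (\<exists>W. 1 \<le> W \<and> real W \<le> real (snd (snd i)) * \<epsilon> powr (- real_of_rat (fst (snd i))) \<and>
      (\<exists>g\<in>NNset \<rho> (fst i) W. f \<in> l2ball \<Omega> g \<epsilon>))}" for i
    have "\<forall>i\<in>I. \<exists>N. N \<in> null_sets P \<and> Ai i \<subseteq> N"
    proof
      fix i assume "i \<in> I"
      then have "0 < real_of_rat (fst (snd i))" "real_of_rat (fst (snd i)) < 1 / s_star" "0 < real (snd (snd i))"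
        by (auto simp: I_def)
      from part2_piece[OF crit rho this, of "fst i"] show "\<exists>N. N \<in> null_sets P \<and> Ai i \<subseteq> N"
        unfolding Ai_def by blast
    qed
    then have "\<exists>Nf. \<forall>i\<in>I. Nf i \<in> null_sets P \<and> Ai i \<subseteq> Nf i" by (rule bchoice)
    then obtain Nf where Nf0: "\<forall>i\<in>I. Nf i \<in> null_sets P \<and> Ai i \<subseteq> Nf i" by blast
    have Nf: "Nf i \<in> null_sets P \<and> Ai i \<subseteq> Nf i" if "i \<in> I" for i using Nf0 that by blast
    define N where "N = (\<Union>i\<in>I. Nf i)"
    have NN: "N \<in> null_sets P" unfolding N_def
      by (rule null_sets_UN') (auto simp: Nf countableI_type)
    have sub: "Astar \<rho> \<Omega> S s_star \<subseteq> N"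
    proof
      fix f assume "f \<in> Astar \<rho> \<Omega> S s_star"
      then obtain \<tau> \<sigma>' C' where f: "f \<in> S" "0 < \<tau>" "\<tau> < 1 / s_star" "C' > 0"
        and Wb: "\<forall>\<epsilon>. 0 < \<epsilon> \<and> \<epsilon> < 1 \<longrightarrow> Weps \<rho> \<sigma>' \<Omega> \<epsilon> f \<noteq> \<infinity> \<and> real (the_enat (Weps \<rho> \<sigma>' \<Omega> \<epsilon> f)) \<le> C' * \<epsilon> powr (- \<tau>)"
        unfolding Astar_def by blast
      obtain r where r: "r \<in> \<rat>" "\<tau> < r" "r < 1 / s_star" using Rats_dense_in_real[OF f(3)] by blast
      then obtain r' where r': "r = real_of_rat r'" by (auto elim: Rats_cases)
      define n where "n = nat \<lceil>C'\<rceil>"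
      have n: "C' \<le> real n" "0 < n" using f(4) by (auto simp: n_def)
      define i where "i = (\<sigma>', r', n)"
      have rpos: "0 < real_of_rat r'" using r r' f(2) by linarith
      have iI: "i \<in> I" using rpos r r' n(2) by (simp add: I_def i_def)
      have "f \<in> Ai i" unfolding Ai_def i_def
      proof (simp add: f(1), intro allI impI)
        fix \<epsilon> :: real assume e: "0 < \<epsilon> \<and> \<epsilon> < 1"
        then have w1: "Weps \<rho> \<sigma>' \<Omega> \<epsilon> f \<noteq> \<infinity>" and w2: "real (the_enat (Weps \<rho> \<sigma>' \<Omega> \<epsilon> f)) \<le> C' * \<epsilon> powr (- \<tau>)"
          using Wb by auto
        obtain W where W: "W \<ge> 1" "\<exists>g\<in>NNset \<rho> \<sigma>' W. f \<in> l2ball \<Omega> g \<epsilon>" "the_enat (Weps \<rho> \<sigma>' \<Omega> \<epsilon> f) = W"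
          using Weps_attained[OF w1] by blast
        have "\<epsilon> powr (- \<tau>) \<le> \<epsilon> powr (- real_of_rat r')"
          by (rule powr_mono') (use e r r' in auto)
        then have "C' * \<epsilon> powr (- \<tau>) \<le> real n * \<epsilon> powr (- real_of_rat r')"
          using n(1) f(4) by (intro mult_mono) auto
        then have "real W \<le> real n * \<epsilon> powr (- real_of_rat r')" using w2 W(3) by linarith
        then show "\<exists>W\<ge>Suc 0. real W \<le> real n * \<epsilon> powr - real_of_rat r' \<and> (\<exists>g\<in>NNset \<rho> \<sigma>' W. f \<in> l2ball \<Omega> g \<epsilon>)"
          using W by auto
      qed
      then show "f \<in> N" using Nf[OF iI] iI unfolding N_def by blast
    qed
    have NP: "N \<in> sets P" using NN by auto
    have "outer_prob P (Astar \<rho> \<Omega> S s_star) \<le> measure P N" by (rule outer_le[OF NP sub])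
    also have "measure P N = 0" by (rule measure_eq_0_null_sets[OF NN])
    finally have le: "outer_prob P (Astar \<rho> \<Omega> S s_star) \<le> 0" .
    have "Astar \<rho> \<Omega> S s_star \<subseteq> space P" using spP by (auto simp: Astar_def)
    then have "0 \<le> outer_prob P (Astar \<rho> \<Omega> S s_star)" by (rule outer_nonneg)
    then show "outer_prob P (Astar \<rho> \<Omega> S s_star) = 0" using le by linarith
  qed
qed


end
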